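(* Let $(\Sigma,\mathscr{P})$ be a Kelvin-Planck theory with set of hotness levels $\mathscr{H}$, and let $T$ be a Clausius-Duhem temperature scale on $\Sigma$. The following are equivalent: (i) every Clausius-Duhem temperature scale on $\Sigma$ is a positive multiple of $T$; (ii) for every $\mathscr{q}\in\mathscr{M}(\Sigma)$ with $\int_\Sigma\frac{d\mathscr{q}}{T}=0$, $(0,\mathscr{q})\in\hat{\mathscr{P}}$; (iii) for each pair of hotness levels $h',h\in\mathscr{H}$ there is a Carnot element of $(\Sigma,\mathscr{P})$ operating between $h'$ and $h$; (iv) for each pair of states $\sigma',\sigma\in\Sigma$ there is a Carnot element of $(\Sigma,\mathscr{P})$ of the form $(0,\mathscr{q})$ with $\mathscr{q}=c'\delta_{\sigma'}-c\,\delta_\sigma$, $c',c>0$, and $c'/c=T(\sigma')/T(\sigma)$.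
   Context: $\Sigma$ is a compact Hausdorff space. $\mathscr{M}(\Sigma)$ is the vector space of regular signed Borel measures on $\Sigma$ with its weak-star topology; $\mathscr{M}_+(\Sigma)$ the nonnegative members; $\mathscr{M}^\circ(\Sigma)=\{\mu:\mu(\Sigma)=0\}$; $\mathscr{V}(\Sigma)=\mathscr{M}^\circ(\Sigma)\oplus\mathscr{M}(\Sigma)$ with the product topology. For $\mathscr{P}\subset\mathscr{V}(\Sigma)$, $\hat{\mathscr{P}}$ is the closure of the set of nonnegative multiples of members of $\mathscr{P}$. A thermodynamical theory is $(\Sigma,\mathscr{P})$ with $\hat{\mathscr{P}}$ convex; it is Kelvin-Planck if $\hat{\mathscr{P}}\cap\{(0,\nu):\nu\in\mathscr{M}_+(\Sigma)\}=\{(0,0)\}$. A Clausius-Duhem pair is $(\eta,T)$, $\eta\in C(\Sigma,\mathbb{R})$, $T\in C(\Sigma,(0,\infty))$, with $\int_\Sigma\eta\,d(\Delta\mathscr{m})\ge\int_\Sigma\frac{d\mathscr{q}}{T}$ for all $(\Delta\mathscr{m},\mathscr{q})\in\mathscr{P}$; $T$ is then a Clausius-Duhem temperature scale. States $\sigma,\sigma'$ are of the same hotness if both $(0,\delta_\sigma-\delta_{\sigma'})$ and $(0,\delta_{\sigma'}-\delta_\sigma)$ lie in $\hat{\mathscr{P}}$; the equivalence classes are the hotness levels. A reversible element is a member of $\hat{\mathscr{P}}$ whose negative also lies in $\hat{\mathscr{P}}$; a cyclic element is a member of $\hat{\mathscr{P}}$ of the form $(0,\mathscr{q})$. A Carnot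 element operating between hotness levels $h'$ and $h$ is a reversible cyclic element $(0,\mathscr{q})$ with $\mathscr{q}=\mu'-\mu$, where $\mu',\mu$ are nonzero members of $\mathscr{M}_+(\Sigma)$ with $\mathrm{supp}\,\mu'\subset h'$ and $\mathrm{supp}\,\mu\subset h$. *)

theory Defs
  imports "HOL-Analysis.Analysis"
begin

text \<open>Regular signed Borel measures on a compact Hausdorff space \<Sigma> (a type 'a with
  UNIV compact) are represented via the Riesz representation theorem as bounded linear
  functionals on C(\<Sigma>), i.e. maps ('a \<Rightarrow> real) \<Rightarrow> real which are linear and bounded on
  continuous functions and (for extensionality) vanish on non-continuous arguments.
  The value of such a functional at f is the integral of f.\<close>

type_synonym 'a meas = "('a \<Rightarrow> real) \<Rightarrow> real"

definition cfuns :: "('a::topological_space \<Rightarrow> real) set" where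
  "cfuns = {f. continuous_on UNIV f}"

definition meas :: "'a::topological_space meas set" where
  "meas = {\<mu>. (\<forall>f\<in>cfuns. \<forall>g\<in>cfuns. \<mu> (\<lambda>x. f x + g x) = \<mu> f + \<mu> g)
              \<and> (\<forall>f\<in>cfuns. \<forall>c. \<mu> (\<lambda>x. c * f x) = c * \<mu> f)
              \<and> (\<exists>K. \<forall>f\<in>cfuns. \<bar>\<mu> f\<bar> \<le> K * (SUP x. \<bar>f x\<bar>))
              \<and> (\<forall>f. f \<notin> cfuns \<longrightarrow> \<mu> f = 0)}"

definition meas_plus :: "'a::topological_space meas set" where
  "meas_plus = {\<mu> \<in> meas. \<forall>f\<in>cfuns. (\<forall>x. 0 \<le> f x) \<longrightarrow> 0 \<le> \<mu> f}"

definition meas_zero_total :: "'a::topological_space meas set" where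
  "meas_zero_total = {\<mu> \<in> meas. \<mu> (\<lambda>_. 1) = 0}"

definition Vsp :: "('a::topological_space meas \<times> 'a meas) set" where
  "Vsp = meas_zero_total \<times> meas"

definition mzero :: "'a meas" where "mzero = (\<lambda>f. 0)"

definition dirac :: "'a::topological_space \<Rightarrow> 'a meas" where
  "dirac \<sigma> = (\<lambda>f. if f \<in> cfuns then f \<sigma> else 0)"

definition mscale :: "real \<Rightarrow> 'a meas \<Rightarrow> 'a meas" where
  "mscale c \<mu> = (\<lambda>f. c * \<mu> f)"

definition mdiff :: "'a meas \<Rightarrow> 'a meas \<Rightarrow> 'a meas" where
  "mdiff \<mu> \<nu> = (\<lambda>f. \<mu> f - \<nu> f)"

definition madd :: "'a meas \<Rightarrow> 'a meas \<Rightarrow> 'a meas" where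
  "madd \<mu> \<nu> = (\<lambda>f. \<mu> f + \<nu> f)"

definition pscale :: "real \<Rightarrow> ('a meas \<times> 'a meas) \<Rightarrow> ('a meas \<times> 'a meas)" where
  "pscale c u = (mscale c (fst u), mscale c (snd u))"

definition padd :: "('a meas \<times> 'a meas) \<Rightarrow> ('a meas \<times> 'a meas) \<Rightarrow> ('a meas \<times> 'a meas)" where
  "padd u v = (madd (fst u) (fst v), madd (snd u) (snd v))"

definition msupport :: "'a::topological_space meas \<Rightarrow> 'a set" where
  "msupport \<mu> = {x. \<forall>U. open U \<and> x \<in> U \<longrightarrow>
      (\<exists>f\<in>cfuns. (\<forall>y. y \<notin> U \<longrightarrow> f y = 0) \<and> \<mu> f \<noteq> 0)}"

text \<open>Closure in V(\<Sigma>) with the product of the weak-star topologies (basic neighbourhoods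
  given by finitely many continuous test functions).\<close>
definition wclosure :: "('a::topological_space meas \<times> 'a meas) set \<Rightarrow> ('a meas \<times> 'a meas) set" where
  "wclosure A = {u \<in> Vsp. \<forall>F. finite F \<and> F \<subseteq> cfuns \<longrightarrow> (\<forall>e>0. \<exists>v\<in>A.
       \<forall>f\<in>F. \<bar>fst u f - fst v f\<bar> < e \<and> \<bar>snd u f - snd v f\<bar> < e)}"

definition hatP :: "('a::topological_space meas \<times> 'a meas) set \<Rightarrow> ('a meas \<times> 'a meas) set" where
  "hatP P = wclosure {pscale c u | c u. c \<ge> 0 \<and> u \<in> P}"

definition thermo_theory :: "('a::topological_space meas \<times> 'a meas) set \<Rightarrow> bool" where
  "thermo_theory P \<longleftrightarrow> P \<subseteq> Vsp \<and>
     (\<forall>u\<in>hatP P. \<forall>v\<in>hatP P. \<forall>t::real. 0 \<le> t \<and> t \<le> 1 \<longrightarrow> padd (pscale t u) (pscale (1 - t) v) \<in> hatP P)"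

definition kelvin_planck :: "('a::topological_space meas \<times> 'a meas) set \<Rightarrow> bool" where
  "kelvin_planck P \<longleftrightarrow> thermo_theory P \<and>
     hatP P \<inter> {(mzero, \<nu>) | \<nu>. \<nu> \<in> meas_plus} = {(mzero, mzero)}"

definition CD_pair :: "('a::topological_space meas \<times> 'a meas) set \<Rightarrow> ('a \<Rightarrow> real) \<Rightarrow> ('a \<Rightarrow> real) \<Rightarrow> bool" where
  "CD_pair P \<eta> T \<longleftrightarrow> \<eta> \<in> cfuns \<and> T \<in> cfuns \<and> (\<forall>x. 0 < T x) \<and>
     (\<forall>(dm, q)\<in>P. dm \<eta> \<ge> q (\<lambda>x. 1 / T x))"

definition CD_temp :: "('a::topological_space meas \<times> 'a meas) set \<Rightarrow> ('a \<Rightarrow> real) \<Rightarrow> bool" where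
  "CD_temp P T \<longleftrightarrow> (\<exists>\<eta>. CD_pair P \<eta> T)"

definition same_hotness :: "('a::topological_space meas \<times> 'a meas) set \<Rightarrow> 'a \<Rightarrow> 'a \<Rightarrow> bool" where
  "same_hotness P \<sigma> \<sigma>' \<longleftrightarrow> (mzero, mdiff (dirac \<sigma>) (dirac \<sigma>')) \<in> hatP P
                            \<and> (mzero, mdiff (dirac \<sigma>') (dirac \<sigma>)) \<in> hatP P"

definition hotness_levels :: "('a::topological_space meas \<times> 'a meas) set \<Rightarrow> 'a set set" where
  "hotness_levels P = {{\<sigma>'. same_hotness P \<sigma> \<sigma>'} | \<sigma>. True}"

definition reversible :: "('a::topological_space meas \<times> 'a meas) set \<Rightarrow> ('a meas \<times> 'a meas) \<Rightarrow> bool" where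
  "reversible P u \<longleftrightarrow> u \<in> hatP P \<and> pscale (-1) u \<in> hatP P"

definition cyclic :: "('a::topological_space meas \<times> 'a meas) set \<Rightarrow> ('a meas \<times> 'a meas) \<Rightarrow> bool" where
  "cyclic P u \<longleftrightarrow> u \<in> hatP P \<and> fst u = mzero"

definition carnot_between :: "('a::topological_space meas \<times> 'a meas) set \<Rightarrow> 'a set \<Rightarrow> 'a set \<Rightarrow> ('a meas \<times> 'a meas) \<Rightarrow> bool" where
  "carnot_between P h' h u \<longleftrightarrow> reversible P u \<and> cyclic P u \<and>
     (\<exists>\<mu>' \<mu>. \<mu>' \<in> meas_plus \<and> \<mu> \<in> meas_plus \<and> \<mu>' \<noteq> mzero \<and> \<mu> \<noteq> mzero \<and>
        msupport \<mu>' \<subseteq> h' \<and> msupport \<mu> \<subseteq> h \<and> snd u = mdiff \<mu>' \<mu>)"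

definition carnot :: "('a::topological_space meas \<times> 'a meas) set \<Rightarrow> ('a meas \<times> 'a meas) \<Rightarrow> bool" where
  "carnot P u \<longleftrightarrow> (\<exists>h'\<in>hotness_levels P. \<exists>h\<in>hotness_levels P. carnot_between P h' h u)"

end

theory Submission
  imports Defs
begin

lemma urysohn_pt:
  fixes x :: "'a::t2_space"
  assumes cpt: "compact (UNIV :: 'a set)" and U: "open U" "x \<in> U"
  shows "\<exists>\<psi>\<in>cfuns. (\<forall>y. 0 \<le> \<psi> y \<and> \<psi> y \<le> 1) \<and> \<psi> x = 1 \<and> (\<forall>y. y \<notin> U \<longrightarrow> \<psi> y = 0)"
proof -
  have H: "Hausdorff_space (euclidean :: 'a topology)"
    unfolding Hausdorff_space_def using hausdorff by (auto simp: disjnt_def)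
  have C: "compact_space (euclidean :: 'a topology)"
    using cpt by (simp add: compact_space_def)
  have N: "normal_space (euclidean :: 'a topology)"
    using compact_Hausdorff_or_regular_imp_normal_space[OF C] H by blast
  obtain f where f: "continuous_map euclidean euclideanreal f" "f ` {x} \<subseteq> {1}" "f ` (- U) \<subseteq> {0}"
    using Urysohn_lemma_alt[OF N, of "{x}" "- U" 1 0] U by (auto simp: disjnt_def)
  define \<psi> where "\<psi> = (\<lambda>y. max 0 (min 1 (f y)))"
  have "continuous_on UNIV f" using f(1) by simp
  then have "continuous_on UNIV \<psi>" unfolding \<psi>_def
    by (intro continuous_intros)
  then show ?thesis using f unfolding cfuns_def
    by (intro bexI[of _ \<psi>]) (auto simp: \<psi>_def)
qed


lemma cfuns_iff: "f \<in> cfuns \<longleftrightarrow> continuous_on UNIV f"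
  by (simp add: cfuns_def)

lemma cfuns_const[simp]: "(\<lambda>x. c) \<in> cfuns"
  by (simp add: cfuns_def)

lemma cfuns_lin: "f \<in> cfuns \<Longrightarrow> g \<in> cfuns \<Longrightarrow> (\<lambda>x. a * f x + b * g x) \<in> cfuns"
  by (auto simp: cfuns_def intro!: continuous_intros)

lemma measD:
  assumes "\<mu> \<in> meas"
  shows "\<And>f g. f\<in>cfuns \<Longrightarrow> g\<in>cfuns \<Longrightarrow> \<mu> (\<lambda>x. f x + g x) = \<mu> f + \<mu> g"
    and "\<And>f c. f\<in>cfuns \<Longrightarrow> \<mu> (\<lambda>x. c * f x) = c * \<mu> f"
    and "\<And>f. f \<notin> cfuns \<Longrightarrow> \<mu> f = 0"
  using assms unfolding meas_def by auto

lemma meas_lin: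
  assumes "\<mu> \<in> meas" "f \<in> cfuns" "g \<in> cfuns" "\<And>x. h x = a * f x + b * g x"
  shows "\<mu> h = a * \<mu> f + b * \<mu> g"
proof -
  have "h = (\<lambda>x. (\<lambda>x. a * f x) x + (\<lambda>x. b * g x) x)" using assms(4) by auto
  moreover have "(\<lambda>x. a * f x) \<in> cfuns" "(\<lambda>x. b * g x) \<in> cfuns"
    using assms(2,3) by (auto simp: cfuns_def intro!: continuous_intros)
  ultimately show ?thesis using measD[OF assms(1)] assms(2,3) by simp
qed

lemma meas_scale:
  assumes "\<mu> \<in> meas" "f \<in> cfuns" "\<And>x. h x = a * f x"
  shows "\<mu> h = a * \<mu> f"
  using meas_lin[OF assms(1,2,2), of h a 0] assms(3) by simp

lemma meas_zero_fun: "\<mu> \<in> meas \<Longrightarrow> \<mu> (\<lambda>x. 0) = 0"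
  using meas_scale[of \<mu> "\<lambda>x. 0" "\<lambda>x. 0" 0] by simp

lemma meas_sum:
  assumes "\<mu> \<in> meas" "finite F" "F \<subseteq> cfuns"
  shows "\<mu> (\<lambda>x. \<Sum>f\<in>F. c f * f x) = (\<Sum>f\<in>F. c f * \<mu> f)"
    and "(\<lambda>x. \<Sum>f\<in>F. c f * f x) \<in> cfuns"
proof -
  have "\<mu> (\<lambda>x. \<Sum>f\<in>F. c f * f x) = (\<Sum>f\<in>F. c f * \<mu> f) \<and> (\<lambda>x. \<Sum>f\<in>F. c f * f x) \<in> cfuns"
    using assms(2,3)
  proof (induction F rule: finite_induct)
    case empty
    then show ?case using meas_zero_fun[OF assms(1)] by simp
  next
    case (insert g F)
    then have g: "g \<in> cfuns" and IH: "\<mu> (\<lambda>x. \<Sum>f\<in>F. c f * f x) = (\<Sum>f\<in>F. c f * \<mu> f)"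
       "(\<lambda>x. \<Sum>f\<in>F. c f * f x) \<in> cfuns" by auto
    have "\<mu> (\<lambda>x. \<Sum>f\<in>insert g F. c f * f x) = c g * \<mu> g + 1 * \<mu> (\<lambda>x. \<Sum>f\<in>F. c f * f x)"
      by (rule meas_lin[OF assms(1) g IH(2)]) (simp add: insert)
    moreover have "(\<lambda>x. \<Sum>f\<in>insert g F. c f * f x) \<in> cfuns"
      using cfuns_lin[OF g IH(2), of "c g" 1] insert by simp
    ultimately show ?case using IH insert by simp
  qed
  then show "\<mu> (\<lambda>x. \<Sum>f\<in>F. c f * f x) = (\<Sum>f\<in>F. c f * \<mu> f)"
    and "(\<lambda>x. \<Sum>f\<in>F. c f * f x) \<in> cfuns" by auto
qed

lemma mzero_meas[simp]: "mzero \<in> meas"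
  unfolding meas_def mzero_def mem_Collect_eq by (auto intro!: exI[of _ 0])

lemma mzero_mzt[simp]: "mzero \<in> meas_zero_total"
  by (simp add: meas_zero_total_def) (simp add: mzero_def)

lemma madd_meas: fixes \<mu> :: "'a::topological_space meas" shows "\<mu> \<in> meas \<Longrightarrow> \<nu> \<in> meas \<Longrightarrow> madd \<mu> \<nu> \<in> meas"
proof -
  assume a: "\<mu> \<in> meas" "\<nu> \<in> meas"
  then obtain K1 K2 where K: "\<forall>f\<in>cfuns. \<bar>\<mu> f\<bar> \<le> K1 * (SUP x. \<bar>f x\<bar>)" "\<forall>f\<in>cfuns. \<bar>\<nu> f\<bar> \<le> K2 * (SUP x. \<bar>f x\<bar>)"
    unfolding meas_def by auto
  have "\<forall>f\<in>(cfuns::('a\<Rightarrow>real) set). \<bar>\<mu> f + \<nu> f\<bar> \<le> (K1 + K2) * (SUP x. \<bar>f x\<bar>)"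
  proof
    fix f :: "'a \<Rightarrow> real" assume "f \<in> cfuns"
    then have "\<bar>\<mu> f\<bar> \<le> K1 * (SUP x. \<bar>f x\<bar>)" "\<bar>\<nu> f\<bar> \<le> K2 * (SUP x. \<bar>f x\<bar>)" using K by auto
    then show "\<bar>\<mu> f + \<nu> f\<bar> \<le> (K1 + K2) * (SUP x. \<bar>f x\<bar>)" by (simp add: algebra_simps)
  qed
  then have E: "\<exists>K. \<forall>f\<in>(cfuns::('a\<Rightarrow>real) set). \<bar>\<mu> f + \<nu> f\<bar> \<le> K * (SUP x. \<bar>f x\<bar>)" by blast
  show ?thesis using a unfolding meas_def madd_def mem_Collect_eq
    apply (intro conjI)
    subgoal by auto
    subgoal by (auto simp: distrib_left)
    subgoal using E by simp
    subgoal by auto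
    done
qed

lemma mscale_meas: fixes \<mu> :: "'a::topological_space meas" shows "\<mu> \<in> meas \<Longrightarrow> mscale c \<mu> \<in> meas"
proof -
  assume a: "\<mu> \<in> meas"
  then obtain K where K: "\<forall>f\<in>cfuns. \<bar>\<mu> f\<bar> \<le> K * (SUP x. \<bar>f x\<bar>)"
    unfolding meas_def by auto
  have "\<forall>f\<in>(cfuns::('a\<Rightarrow>real) set). \<bar>c * \<mu> f\<bar> \<le> (\<bar>c\<bar> * K) * (SUP x. \<bar>f x\<bar>)"
  proof
    fix f :: "'a \<Rightarrow> real" assume "f \<in> cfuns"
    then have "\<bar>\<mu> f\<bar> \<le> K * (SUP x. \<bar>f x\<bar>)" using K by auto
    then have "\<bar>c\<bar> * \<bar>\<mu> f\<bar> \<le> \<bar>c\<bar> * (K * (SUP x. \<bar>f x\<bar>))" by (simp add: mult_left_mono)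
    then show "\<bar>c * \<mu> f\<bar> \<le> (\<bar>c\<bar> * K) * (SUP x. \<bar>f x\<bar>)" by (simp add: abs_mult mult.assoc)
  qed
  then have E: "\<exists>K. \<forall>f\<in>(cfuns::('a\<Rightarrow>real) set). \<bar>c * \<mu> f\<bar> \<le> K * (SUP x. \<bar>f x\<bar>)" by blast
  show ?thesis using a unfolding meas_def mscale_def mem_Collect_eq
    apply (intro conjI)
    subgoal by (auto simp: distrib_left)
    subgoal by (auto simp: mult.left_commute)
    subgoal using E by simp
    subgoal by auto
    done
qed

lemma mdiff_eq: "mdiff \<mu> \<nu> = madd \<mu> (mscale (-1) \<nu>)"
  by (auto simp: mdiff_def madd_def mscale_def)

lemma mdiff_meas: "\<mu> \<in> meas \<Longrightarrow> \<nu> \<in> meas \<Longrightarrow> mdiff \<mu> \<nu> \<in> meas"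
  by (simp add: mdiff_eq madd_meas mscale_meas)

lemma cfun_bounded:
  assumes cpt: "compact (UNIV :: 'a::topological_space set)" and f: "(f::'a \<Rightarrow> real) \<in> cfuns"
  shows "bdd_above (range (\<lambda>x. \<bar>f x\<bar>))"
proof -
  have "continuous_on UNIV (\<lambda>x. \<bar>f x\<bar>)" using f by (auto simp: cfuns_def intro!: continuous_intros)
  then have "compact (range (\<lambda>x. \<bar>f x\<bar>))" using cpt compact_continuous_image by blast
  then show ?thesis by (simp add: bounded_imp_bdd_above compact_imp_bounded)
qed

lemma cfun_max:
  assumes cpt: "compact (UNIV :: 'a::topological_space set)" and f: "(f::'a \<Rightarrow> real) \<in> cfuns"
  shows "\<exists>B. \<forall>x. \<bar>f x\<bar> \<le> B"
  using cfun_bounded[OF assms] by (auto simp: bdd_above_def)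

lemma dirac_meas:
  assumes cpt: "compact (UNIV :: 'a::topological_space set)"
  shows "dirac (\<sigma>::'a) \<in> meas"
proof -
  have "\<forall>f\<in>cfuns. \<bar>dirac \<sigma> f\<bar> \<le> 1 * (SUP x. \<bar>f x\<bar>)"
    using cfun_bounded[OF cpt] by (auto simp: dirac_def intro: cSUP_upper)
  then have E: "\<exists>K. \<forall>f\<in>(cfuns::('a\<Rightarrow>real) set). \<bar>dirac \<sigma> f\<bar> \<le> K * (SUP x. \<bar>f x\<bar>)" by blast
  show ?thesis unfolding meas_def mem_Collect_eq
    apply (intro conjI)
    subgoal by (auto simp: dirac_def cfuns_def intro!: continuous_intros)
    subgoal by (auto simp: dirac_def cfuns_def intro!: continuous_intros)
    subgoal using E by simp
    subgoal by (auto simp: dirac_def)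
    done
qed

lemma dirac_app: "f \<in> cfuns \<Longrightarrow> dirac \<sigma> f = f \<sigma>"
  by (simp add: dirac_def)

lemma meas_plus_mono:
  assumes "\<mu> \<in> meas_plus" "f \<in> cfuns" "g \<in> cfuns" "\<And>x. f x \<le> g x"
  shows "\<mu> f \<le> \<mu> g"
proof -
  have m: "\<mu> \<in> meas" using assms(1) by (simp add: meas_plus_def)
  have "0 \<le> \<mu> (\<lambda>x. 1 * g x + (-1) * f x)"
    using assms cfuns_lin[OF assms(3,2), of 1 "-1"] by (auto simp: meas_plus_def)
  also have "\<dots> = 1 * \<mu> g + (-1) * \<mu> f" by (rule meas_lin[OF m assms(3,2)]) simp
  finally show ?thesis by simp
qed


lemma sum_sq_tendsto:
  fixes Z :: "nat \<Rightarrow> 'i \<Rightarrow> real"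
  assumes "finite I" "\<And>i. i \<in> I \<Longrightarrow> (\<lambda>n. Z n i) \<longlonglongrightarrow> z i"
  shows "(\<lambda>n. \<Sum>i\<in>I. (Z n i - p i)\<^sup>2) \<longlonglongrightarrow> (\<Sum>i\<in>I. (z i - p i)\<^sup>2)"
proof -
  have "(\<lambda>n. (Z n i - p i)\<^sup>2) \<longlonglongrightarrow> (z i - p i)\<^sup>2" if "i\<in>I" for i
    by (intro tendsto_power tendsto_diff assms(2)[OF that] tendsto_const)
  then show ?thesis by (rule tendsto_sum)
qed

lemma sep_finite:
  fixes K :: "('i \<Rightarrow> real) set" and p :: "'i \<Rightarrow> real"
  assumes I: "finite I"
   and add: "\<And>x y. x\<in>K \<Longrightarrow> y\<in>K \<Longrightarrow> (\<lambda>i. x i + y i) \<in> K"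
   and scl: "\<And>x c. x\<in>K \<Longrightarrow> 0 \<le> c \<Longrightarrow> (\<lambda>i. c * x i) \<in> K"
   and K0: "(\<lambda>i. 0) \<in> K"
   and e: "e > 0"
   and far: "\<And>x. x\<in>K \<Longrightarrow> \<exists>i\<in>I. e \<le> \<bar>x i - p i\<bar>"
  shows "\<exists>w. (\<forall>x\<in>K. 0 \<le> (\<Sum>i\<in>I. w i * x i)) \<and> (\<Sum>i\<in>I. w i * p i) < 0"
proof -
  define g where "g x = (\<Sum>i\<in>I. (x i - p i)\<^sup>2)" for x :: "'i \<Rightarrow> real"
  have gpos: "0 \<le> g x" for x unfolding g_def by (simp add: sum_nonneg)
  have gK: "e\<^sup>2 \<le> g x" if xK: "x \<in> K" for x
  proof -
    obtain i where i: "i \<in> I" "e \<le> \<bar>x i - p i\<bar>" using far[OF xK] by blast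
    have "e\<^sup>2 \<le> (x i - p i)\<^sup>2" using i e
      by (metis abs_of_pos power2_abs power_mono less_imp_le)
    also have "\<dots> \<le> g x" unfolding g_def using I i(1) by (intro member_le_sum) auto
    finally show ?thesis .
  qed
  define d where "d = Inf (g ` K)"
  have bdd: "bdd_below (g ` K)" by (rule bdd_belowI[of _ 0]) (auto simp: gpos)
  have dle: "d \<le> g x" if "x \<in> K" for x unfolding d_def using bdd that by (simp add: cInf_lower)
  have dge: "e\<^sup>2 \<le> d" unfolding d_def using K0 gK by (intro cInf_greatest) auto
  have "\<exists>x\<in>K. g x < d + 1 / real (Suc n)" for n
  proof -
    have "Inf (g ` K) < d + 1 / real (Suc n)" unfolding d_def by simp
    then obtain y where "y \<in> g ` K" "y < d + 1 / real (Suc n)"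
      using cInf_lessD[of "g ` K"] K0 by blast
    then show ?thesis by auto
  qed
  then obtain X where X: "\<And>n. X n \<in> K" "\<And>n. g (X n) < d + 1 / real (Suc n)" by metis
  have Xb: "\<bar>X n i\<bar> \<le> \<bar>p i\<bar> + d + 2" if "i \<in> I" for n i
  proof -
    have "(X n i - p i)\<^sup>2 \<le> g (X n)" unfolding g_def using I that by (intro member_le_sum) auto
    also have "\<dots> \<le> d + 1"
    proof -
      have "1 / real (Suc n) \<le> 1" by (simp add: divide_le_eq)
      then show ?thesis using X(2)[of n] by linarith
    qed
    finally have h: "(X n i - p i)\<^sup>2 \<le> d + 1" .
    have "0 \<le> (\<bar>X n i - p i\<bar> - 1)\<^sup>2" by simp
    then have "0 \<le> (X n i - p i)\<^sup>2 - 2 * \<bar>X n i - p i\<bar> + 1" by (simp add: power2_diff power2_abs)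
    then have "\<bar>X n i - p i\<bar> \<le> (X n i - p i)\<^sup>2 + 1" by (smt (verit) zero_le_power2)
    then show ?thesis using h by linarith
  qed
  obtain l r where r: "strict_mono r"
    and conv: "\<forall>\<epsilon>>0. eventually (\<lambda>n. \<forall>i\<in>I. dist (X (r n) i) (l i) < \<epsilon>) sequentially"
  proof -
    have "\<forall>\<delta>\<subseteq>I. \<exists>l::'i\<Rightarrow>real. \<exists>r::nat\<Rightarrow>nat. strict_mono r \<and>
       (\<forall>\<epsilon>>0. eventually (\<lambda>n. \<forall>i\<in>\<delta>. dist (X (r n) i) (l i) < \<epsilon>) sequentially)"
    proof (rule compact_lemma_general[where proj="\<lambda>x k. x k" and unproj="\<lambda>e. e"])
      show "finite I" by fact
      fix k assume "k \<in> I"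
      show "bounded ((\<lambda>x. x k) ` range X)"
        unfolding bounded_iff using Xb[OF \<open>k \<in> I\<close>] by auto
    qed auto
    then show ?thesis using that by blast
  qed
  have lim: "(\<lambda>n. X (r n) i) \<longlonglongrightarrow> l i" if "i \<in> I" for i
    unfolding tendsto_iff using conv that by (auto elim!: eventually_mono)
  have a_lim: "(\<lambda>n. d + 1 / real (Suc (r n))) \<longlonglongrightarrow> d"
  proof -
    have "(\<lambda>n. d + 1 / real (Suc n)) \<longlonglongrightarrow> d + 0"
      using LIMSEQ_inverse_real_of_nat by (intro tendsto_add) (auto simp: divide_inverse)
    then show ?thesis using LIMSEQ_subseq_LIMSEQ[OF _ r, of "\<lambda>n. d + 1 / real (Suc n)"] by (simp add: o_def)
  qed
  have "(\<lambda>n. g (X (r n))) \<longlonglongrightarrow> d"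
    by (rule tendsto_sandwich[OF _ _ tendsto_const a_lim]) (use dle X in \<open>auto simp: less_imp_le\<close>)
  moreover have "(\<lambda>n. g (X (r n))) \<longlonglongrightarrow> g l"
    unfolding g_def by (rule sum_sq_tendsto[OF I lim])
  ultimately have gl: "g l = d" using LIMSEQ_unique by blast
  define w where "w i = l i - p i" for i
  have S: "0 \<le> (\<Sum>i\<in>I. w i * (y i - l i))" if y: "y \<in> K" for y
  proof -
    define S where "S = (\<Sum>i\<in>I. w i * (y i - l i))"
    define Q where "Q = (\<Sum>i\<in>I. (y i - l i)\<^sup>2)"
    have Q0: "0 \<le> Q" unfolding Q_def by (simp add: sum_nonneg)
    have key: "0 \<le> 2 * S + t * Q" if t: "0 < t" "t \<le> 1" for t
    proof -
      define Z where "Z n = (\<lambda>i. (1 - t) * X (r n) i + t * y i)" for n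
      have ZK: "Z n \<in> K" for n unfolding Z_def using add scl X(1) y t by simp
      have "(\<lambda>n. g (Z n)) \<longlonglongrightarrow> g (\<lambda>i. (1 - t) * l i + t * y i)"
        unfolding g_def Z_def by (rule sum_sq_tendsto[OF I]) (auto intro!: tendsto_intros lim)
      then have "d \<le> g (\<lambda>i. (1 - t) * l i + t * y i)"
        by (rule LIMSEQ_le_const) (use dle ZK in auto)
      also have "g (\<lambda>i. (1 - t) * l i + t * y i) = g l + 2 * t * S + t\<^sup>2 * Q"
      proof -
        have "g (\<lambda>i. (1 - t) * l i + t * y i) = (\<Sum>i\<in>I. (l i - p i)\<^sup>2 + 2 * t * (w i * (y i - l i)) + t\<^sup>2 * (y i - l i)\<^sup>2)"
          unfolding g_def w_def by (intro sum.cong) (auto simp: power2_eq_square algebra_simps)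
        also have "\<dots> = g l + 2 * t * S + t\<^sup>2 * Q"
          unfolding g_def S_def Q_def by (simp add: sum.distrib sum_distrib_left)
        finally show ?thesis .
      qed
      finally have "0 \<le> t * (2 * S + t * Q)" using gl by (simp add: power2_eq_square algebra_simps)
      then show ?thesis using t by (simp add: zero_le_mult_iff)
    qed
    show ?thesis
    proof (rule ccontr)
      assume "\<not> 0 \<le> (\<Sum>i\<in>I. w i * (y i - l i))"
      then have Sn: "S < 0" unfolding S_def by simp
      define t where "t = min 1 (- S / (Q + 1))"
      have "0 < -S/(Q+1)" using Sn Q0 by (intro divide_pos_pos) auto
      then have t0: "0 < t" "t \<le> 1" unfolding t_def by auto
      have "t * Q \<le> (- S / (Q + 1)) * Q" unfolding t_def using Q0 by (intro mult_right_mono) auto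
      also have "\<dots> \<le> - S" using Q0 Sn by (simp add: field_simps)
      finally have "2 * S + t * Q < 0" using Sn by linarith
      then show False using key[OF t0] by linarith
    qed
  qed
  have Sc: "c * (\<Sum>i\<in>I. w i * y i) \<ge> (\<Sum>i\<in>I. w i * l i)" if "y \<in> K" "0 \<le> c" for y c
  proof -
    have "0 \<le> (\<Sum>i\<in>I. w i * (c * y i - l i))" using S[OF scl[OF that]] by simp
    also have "\<dots> = c * (\<Sum>i\<in>I. w i * y i) - (\<Sum>i\<in>I. w i * l i)"
      by (simp add: algebra_simps sum_subtractf sum_distrib_left)
    finally show ?thesis by simp
  qed
  have wl: "(\<Sum>i\<in>I. w i * l i) \<le> 0" using Sc[OF K0, of 0] by simp
  show ?thesis
  proof (intro exI conjI ballI)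
    fix y assume y: "y \<in> K"
    show "0 \<le> (\<Sum>i\<in>I. w i * y i)"
    proof (rule ccontr)
      assume "\<not> 0 \<le> (\<Sum>i\<in>I. w i * y i)"
      then have neg: "(\<Sum>i\<in>I. w i * y i) < 0" by simp
      define c where "c = (\<bar>\<Sum>i\<in>I. w i * l i\<bar> + 1) / (- (\<Sum>i\<in>I. w i * y i))"
      have c0: "0 \<le> c" unfolding c_def using neg by (intro divide_nonneg_pos) auto
      have "c * (\<Sum>i\<in>I. w i * y i) = - (\<bar>\<Sum>i\<in>I. w i * l i\<bar> + 1)"
        unfolding c_def using neg by (simp add: field_simps)
      then show False using Sc[OF y c0] by linarith
    qed
  next
    have "(\<Sum>i\<in>I. w i * p i) = (\<Sum>i\<in>I. w i * l i) - (\<Sum>i\<in>I. w i * (l i - p i))"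
      by (simp add: algebra_simps sum_subtractf)
    also have "(\<Sum>i\<in>I. w i * (l i - p i)) = g l"
      unfolding g_def w_def by (simp add: power2_eq_square)
    moreover have "0 < e\<^sup>2" using e by simp
    ultimately show "(\<Sum>i\<in>I. w i * p i) < 0" using wl gl dge by linarith
  qed
qed


lemma meas_sum2:
  assumes "\<mu> \<in> meas" "finite X" "\<And>x. x \<in> X \<Longrightarrow> \<phi> x \<in> cfuns"
  shows "\<mu> (\<lambda>y. \<Sum>x\<in>X. \<phi> x y) = (\<Sum>x\<in>X. \<mu> (\<phi> x)) \<and> (\<lambda>y. \<Sum>x\<in>X. \<phi> x y) \<in> cfuns"
  using assms(2,3)
proof (induction X rule: finite_induct)
  case empty
  then show ?case using meas_zero_fun[OF assms(1)] by simp
next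
  case (insert a X)
  then have g: "\<phi> a \<in> cfuns" and IH: "\<mu> (\<lambda>y. \<Sum>x\<in>X. \<phi> x y) = (\<Sum>x\<in>X. \<mu> (\<phi> x))"
     "(\<lambda>y. \<Sum>x\<in>X. \<phi> x y) \<in> cfuns" by auto
  have "\<mu> (\<lambda>y. \<Sum>x\<in>insert a X. \<phi> x y) = 1 * \<mu> (\<phi> a) + 1 * \<mu> (\<lambda>y. \<Sum>x\<in>X. \<phi> x y)"
    by (rule meas_lin[OF assms(1) g IH(2)]) (simp add: insert)
  moreover have "(\<lambda>y. \<Sum>x\<in>insert a X. \<phi> x y) \<in> cfuns"
    using cfuns_lin[OF g IH(2), of 1 1] insert by simp
  ultimately show ?case using IH insert by simp
qed

lemma meas_plus_meas: "\<mu> \<in> meas_plus \<Longrightarrow> \<mu> \<in> meas"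
  by (simp add: meas_plus_def)

lemma meas_plus_nonneg: "\<mu> \<in> meas_plus \<Longrightarrow> f \<in> cfuns \<Longrightarrow> (\<And>x. 0 \<le> f x) \<Longrightarrow> 0 \<le> \<mu> f"
  by (auto simp: meas_plus_def)

lemma support_pos:
  fixes \<mu> :: "'a::t2_space meas"
  assumes cpt: "compact (UNIV :: 'a set)" and mu: "\<mu> \<in> meas_plus" and G: "G \<in> cfuns"
    and sup: "\<And>x. x \<in> msupport \<mu> \<Longrightarrow> 0 \<le> G x"
  shows "0 \<le> \<mu> G"
proof -
  have m: "\<mu> \<in> meas" using mu by (rule meas_plus_meas)
  have one: "0 \<le> \<mu> (\<lambda>_. 1)" using meas_plus_nonneg[OF mu] by simp
  have Gc: "continuous_on UNIV G" using G by (simp add: cfuns_def)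
  have main: "- \<epsilon> * \<mu> (\<lambda>_. 1) \<le> \<mu> G" if eps: "\<epsilon> > 0" for \<epsilon>
  proof -
    define H where "H = (\<lambda>x. max 0 (- G x - \<epsilon>))"
    have Hc: "H \<in> cfuns" unfolding H_def cfuns_def mem_Collect_eq using Gc by (intro continuous_intros)
    have H0: "0 \<le> H x" for x unfolding H_def by simp
    define C where "C = {x. \<epsilon> \<le> - G x}"
    have "closed C" unfolding C_def using Gc by (intro closed_Collect_le continuous_intros) auto
    then have cC: "compact C" using compact_Int_closed[OF cpt] by (metis inf_top_left)
    have "\<exists>\<psi>. \<psi> \<in> cfuns \<and> (\<forall>y. 0 \<le> \<psi> y \<and> \<psi> y \<le> 1) \<and> \<psi> x = 1 \<and> \<mu> \<psi> = 0" if "x \<in> C" for x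
    proof -
      have "x \<notin> msupport \<mu>"
      proof
        assume "x \<in> msupport \<mu>"
        then have "0 \<le> G x" by (rule sup)
        with that eps show False unfolding C_def by simp
      qed
      then obtain U where U: "open U" "x \<in> U" and Ue: "\<And>f. f \<in> cfuns \<Longrightarrow> (\<forall>y. y \<notin> U \<longrightarrow> f y = 0) \<Longrightarrow> \<mu> f = 0"
        unfolding msupport_def by blast
      obtain \<psi> where "\<psi>\<in>cfuns" "\<forall>y. 0 \<le> \<psi> y \<and> \<psi> y \<le> 1" "\<psi> x = 1" "\<forall>y. y \<notin> U \<longrightarrow> \<psi> y = 0"
        using urysohn_pt[OF cpt U] by blast
      then show ?thesis using Ue by blast
    qed
    then have "\<forall>x\<in>C. \<exists>\<psi>. \<psi> \<in> cfuns \<and> (\<forall>y. 0 \<le> \<psi> y \<and> \<psi> y \<le> 1) \<and> \<psi> x = 1 \<and> \<mu> \<psi> = 0" by blast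
    from bchoice[OF this] obtain psi where psi0: "\<forall>x\<in>C. psi x \<in> cfuns \<and> (\<forall>y. 0 \<le> psi x y \<and> psi x y \<le> 1) \<and> psi x x = 1 \<and> \<mu> (psi x) = 0"
      by blast
    have psi: "\<And>x. x \<in> C \<Longrightarrow> psi x \<in> cfuns" "\<And>x y. x \<in> C \<Longrightarrow> 0 \<le> psi x y"
       "\<And>x. x \<in> C \<Longrightarrow> psi x x = 1" "\<And>x. x \<in> C \<Longrightarrow> \<mu> (psi x) = 0"
      using psi0 by auto
    have "C \<subseteq> (\<Union>x\<in>C. {y. 1/2 < psi x y})"
    proof
      fix x assume "x \<in> C"
      then show "x \<in> (\<Union>x\<in>C. {y. 1/2 < psi x y})" using psi(3)[of x] by (intro UN_I[of x]) auto
    qed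
    moreover have "open {y. 1/2 < psi x y}" if "x \<in> C" for x
      using psi(1)[OF that] by (intro open_Collect_less continuous_intros) (auto simp: cfuns_def)
    ultimately obtain X where X: "X \<subseteq> C" "finite X" "C \<subseteq> (\<Union>x\<in>X. {y. 1/2 < psi x y})"
      using compactE_image[OF cC, of C "\<lambda>x. {y. 1/2 < psi x y}"] by blast
    define Psi where "Psi = (\<lambda>y. \<Sum>x\<in>X. psi x y)"
    have pc: "\<And>x. x \<in> X \<Longrightarrow> psi x \<in> cfuns" using psi(1) X(1) by blast
    have PsiS: "\<mu> Psi = 0" "Psi \<in> cfuns"
      using meas_sum2[OF m X(2), of psi, OF pc] psi(4) X(1) unfolding Psi_def by (auto intro!: sum.neutral)
    obtain B where B: "\<And>x. \<bar>H x\<bar> \<le> B" using cfun_max[OF cpt Hc] by blast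
    have HB: "H y \<le> (2 * B) * Psi y" for y
    proof (cases "H y > 0")
      case True
      then have "y \<in> C" unfolding H_def C_def by auto
      then obtain x where x: "x \<in> X" "1/2 < psi x y" using X(3) by blast
      have "psi x y \<le> Psi y" unfolding Psi_def using X psi(2) x(1)
        by (intro member_le_sum) auto
      then have "1/2 < Psi y" using x by linarith
      moreover have "0 \<le> B" using B[of y] by linarith
      ultimately have "(2 * B) * (1/2) \<le> (2 * B) * Psi y"
        by (intro mult_left_mono) auto
      then have "B \<le> (2 * B) * Psi y" by simp
      then show ?thesis using B[of y] by linarith
    next
      case False
      have "0 \<le> Psi y" unfolding Psi_def using X psi(2) by (intro sum_nonneg) auto
      moreover have "0 \<le> B" using B[of y] by linarith
      ultimately have "0 \<le> (2 * B) * Psi y" by simp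
      then show ?thesis using False H0[of y] by linarith
    qed
    have "\<mu> H \<le> \<mu> (\<lambda>y. (2 * B) * Psi y)"
      by (rule meas_plus_mono[OF mu Hc _ HB]) (use PsiS(2) in \<open>auto simp: cfuns_def intro!: continuous_intros\<close>)
    also have "\<dots> = (2 * B) * \<mu> Psi" by (rule meas_scale[OF m PsiS(2)]) simp
    finally have muH: "\<mu> H = 0" using PsiS(1) meas_plus_nonneg[OF mu Hc H0] by simp
    define J where "J = (\<lambda>x. 1 * H x + \<epsilon> * 1)"
    have Jc: "J \<in> cfuns" unfolding J_def by (rule cfuns_lin[OF Hc cfuns_const])
    have muJ: "\<mu> J = \<epsilon> * \<mu> (\<lambda>_. 1)" unfolding J_def
      using meas_lin[OF m Hc cfuns_const, of "\<lambda>x. 1 * H x + \<epsilon> * 1" 1 \<epsilon>] muH by simp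
    have "0 \<le> \<mu> (\<lambda>x. 1 * G x + 1 * J x)"
      by (rule meas_plus_nonneg[OF mu cfuns_lin[OF G Jc]]) (auto simp: J_def H_def)
    also have "\<dots> = \<mu> G + \<mu> J" using meas_lin[OF m G Jc, of "\<lambda>x. 1 * G x + 1 * J x" 1 1] by simp
    finally show ?thesis using muJ by simp
  qed
  show ?thesis
  proof (rule ccontr)
    assume "\<not> 0 \<le> \<mu> G"
    then have neg: "\<mu> G < 0" by simp
    define \<epsilon> where "\<epsilon> = - \<mu> G / (\<mu> (\<lambda>_. 1) + 1)"
    have e0: "\<epsilon> > 0" unfolding \<epsilon>_def using neg one by (intro divide_pos_pos) auto
    have "\<epsilon> * \<mu> (\<lambda>_. 1) < - \<mu> G"
    proof -
      have "\<epsilon> * \<mu> (\<lambda>_. 1) = - \<mu> G * (\<mu> (\<lambda>_. 1) / (\<mu> (\<lambda>_. 1) + 1))" unfolding \<epsilon>_def using one by (simp add: field_simps)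
      also have "\<dots> < - \<mu> G * 1" using neg one by (intro mult_strict_left_mono) auto
      finally show ?thesis by simp
    qed
    then show False using main[OF e0] by linarith
  qed
qed

lemma meas_plus_one_pos:
  fixes \<mu> :: "'a::topological_space meas"
  assumes cpt: "compact (UNIV :: 'a set)" and mu: "\<mu> \<in> meas_plus" and nz: "\<mu> \<noteq> mzero"
  shows "0 < \<mu> (\<lambda>_. 1)"
proof (rule ccontr)
  assume "\<not> 0 < \<mu> (\<lambda>_. 1)"
  moreover have "0 \<le> \<mu> (\<lambda>_. 1)" using meas_plus_nonneg[OF mu] by simp
  ultimately have z: "\<mu> (\<lambda>_. 1) = 0" by simp
  have m: "\<mu> \<in> meas" using mu by (rule meas_plus_meas)
  have "\<mu> f = 0" for f
  proof (cases "f \<in> cfuns")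
    case True
    obtain B where B: "\<And>x. \<bar>f x\<bar> \<le> B" using cfun_max[OF cpt True] by blast
    have cB: "\<mu> (\<lambda>_. B) = 0" using meas_scale[OF m cfuns_const, of "\<lambda>_. B" B 1] z by simp
    have cmB: "\<mu> (\<lambda>_. -B) = 0" using meas_scale[OF m cfuns_const, of "\<lambda>_. -B" "-B" 1] z by simp
    have B1: "f x \<le> B" "-B \<le> f x" for x using B[of x] by (auto simp: abs_le_iff)
    have "\<mu> f \<le> \<mu> (\<lambda>_. B)" by (rule meas_plus_mono[OF mu True cfuns_const]) (rule B1)
    moreover have "\<mu> (\<lambda>_. -B) \<le> \<mu> f" by (rule meas_plus_mono[OF mu cfuns_const True]) (rule B1)
    ultimately show ?thesis using cB cmB by simp
  next
    case False
    then show ?thesis using measD(3)[OF m] by simp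
  qed
  then have "\<mu> = mzero" by (auto simp: mzero_def)
  then show False using nz by simp
qed

lemma msupport_dirac:
  fixes \<sigma> :: "'a::t2_space"
  shows "msupport (mscale c (dirac \<sigma>)) \<subseteq> {\<sigma>}"
proof
  fix x assume x: "x \<in> msupport (mscale c (dirac \<sigma>))"
  show "x \<in> {\<sigma>}"
  proof (rule ccontr)
    assume "x \<notin> {\<sigma>}"
    then have "x \<noteq> \<sigma>" by simp
    then obtain U V where UV: "open U" "open V" "x \<in> U" "\<sigma> \<in> V" "U \<inter> V = {}"
      using hausdorff[of x \<sigma>] by metis
    then have nU: "\<sigma> \<notin> U" by auto
    from x UV(1,3) obtain f where f: "f \<in> cfuns" "\<forall>y. y \<notin> U \<longrightarrow> f y = 0" "mscale c (dirac \<sigma>) f \<noteq> 0"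
      unfolding msupport_def mem_Collect_eq by meson
    have "mscale c (dirac \<sigma>) f = 0" using f(1,2) nU by (simp add: mscale_def dirac_def)
    then show False using f(3) by simp
  qed
qed


definition closeF :: "('a \<Rightarrow> real) set \<Rightarrow> real \<Rightarrow> ('a meas \<times> 'a meas) \<Rightarrow> ('a meas \<times> 'a meas) \<Rightarrow> bool" where
  "closeF F e u v \<longleftrightarrow> (\<forall>f\<in>F. \<bar>fst u f - fst v f\<bar> < e \<and> \<bar>snd u f - snd v f\<bar> < e)"

lemma wclosure_alt: "wclosure A = {u \<in> Vsp. \<forall>F. finite F \<and> F \<subseteq> cfuns \<longrightarrow> (\<forall>e>0. \<exists>v\<in>A. closeF F e u v)}"
  by (simp add: wclosure_def closeF_def)

lemma mscale_mscale[simp]: "mscale c (mscale d \<mu>) = mscale (c * d) \<mu>"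
  by (auto simp: mscale_def)
lemma mscale_one[simp]: "mscale 1 \<mu> = \<mu>"
  by (auto simp: mscale_def)
lemma mscale_zero[simp]: "mscale 0 \<mu> = mzero"
  by (auto simp: mscale_def mzero_def)
lemma mscale_mzero[simp]: "mscale c mzero = mzero"
  by (auto simp: mscale_def mzero_def)
lemma madd_mzero[simp]: "madd mzero mzero = mzero"
  by (auto simp: madd_def mzero_def)
lemma pscale_pair[simp]: "pscale c (a, b) = (mscale c a, mscale c b)"
  by (simp add: pscale_def)
lemma padd_pair[simp]: "padd (a, b) (a', b') = (madd a a', madd b b')"
  by (simp add: padd_def)

lemma Vsp_iff: "u \<in> Vsp \<longleftrightarrow> fst u \<in> meas \<and> fst u (\<lambda>_. 1) = 0 \<and> snd u \<in> meas"
  by (cases u) (auto simp: Vsp_def meas_zero_total_def)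

lemma Vsp_pscale: "u \<in> Vsp \<Longrightarrow> pscale c u \<in> Vsp"
  by (auto simp: Vsp_iff pscale_def mscale_meas) (simp add: mscale_def)

lemma Vsp_padd: "u \<in> Vsp \<Longrightarrow> v \<in> Vsp \<Longrightarrow> padd u v \<in> Vsp"
  by (auto simp: Vsp_iff padd_def madd_meas) (simp add: madd_def)

lemma hatP_Vsp: "hatP P \<subseteq> Vsp"
  by (auto simp: hatP_def wclosure_def)

lemma hatP_D:
  assumes "u \<in> hatP P" "finite F" "F \<subseteq> cfuns" "e > 0"
  shows "\<exists>v\<in>{pscale c u | c u. c \<ge> 0 \<and> u \<in> P}. closeF F e u v"
proof -
  have "u \<in> wclosure {pscale c u | c u. c \<ge> 0 \<and> u \<in> P}" using assms(1) by (simp add: hatP_def)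
  then have "\<forall>F. finite F \<and> F \<subseteq> cfuns \<longrightarrow> (\<forall>e>0. \<exists>v\<in>{pscale c u | c u. c \<ge> 0 \<and> u \<in> P}. closeF F e u v)"
    unfolding wclosure_alt by simp
  then show ?thesis using assms(2-4) by simp
qed

lemma hatP_I:
  assumes "u \<in> Vsp" "\<And>F e. finite F \<Longrightarrow> F \<subseteq> cfuns \<Longrightarrow> e > 0 \<Longrightarrow> \<exists>v\<in>{pscale c u | c u. c \<ge> 0 \<and> u \<in> P}. closeF F e u v"
  shows "u \<in> hatP P"
  using assms unfolding hatP_def wclosure_alt by simp

lemma hatP_closed:
  assumes "u \<in> Vsp" and "\<And>F e. finite F \<Longrightarrow> F \<subseteq> cfuns \<Longrightarrow> e > 0 \<Longrightarrow> \<exists>v\<in>hatP P. closeF F e u v"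
  shows "u \<in> hatP P"
proof -
  have "\<exists>w\<in>{pscale c u | c u. c \<ge> 0 \<and> u \<in> P}. closeF F e u w" if F: "finite F" "F \<subseteq> cfuns" and e: "e > 0" for F e
  proof -
    obtain v where v: "v \<in> hatP P" "closeF F (e/2) u v" using assms(2)[OF F, of "e/2"] e by auto
    have "e/2 > 0" using e by simp
    from hatP_D[OF v(1) F this] obtain w where w: "w \<in> {pscale c u | c u. c \<ge> 0 \<and> u \<in> P}" "closeF F (e/2) v w"
      by blast
    have "closeF F e u w" unfolding closeF_def
    proof
      fix f assume "f \<in> F"
      then have "\<bar>fst u f - fst v f\<bar> < e/2" "\<bar>snd u f - snd v f\<bar> < e/2"
         "\<bar>fst v f - fst w f\<bar> < e/2" "\<bar>snd v f - snd w f\<bar> < e/2"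
        using v(2) w(2) unfolding closeF_def by auto
      then show "\<bar>fst u f - fst w f\<bar> < e \<and> \<bar>snd u f - snd w f\<bar> < e"
        by arith
    qed
    then show ?thesis using w(1) by blast
  qed
  then show ?thesis using assms(1) by (intro hatP_I) auto
qed

lemma P_hatP: "P \<subseteq> Vsp \<Longrightarrow> P \<subseteq> hatP P"
proof
  fix u assume PV: "P \<subseteq> Vsp" and u: "u \<in> P"
  have "u = pscale 1 u" by (cases u) simp
  then have "\<exists>c w. u = pscale c w \<and> 0 \<le> c \<and> w \<in> P" using u by (intro exI[of _ 1] exI[of _ u]) simp
  then have "u \<in> {pscale c u | c u. c \<ge> 0 \<and> u \<in> P}" by blast
  moreover have "closeF F e u u" if "e > 0" for F e using that by (simp add: closeF_def)
  ultimately show "u \<in> hatP P"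
  proof (intro hatP_I)
    show "u \<in> Vsp" using PV u by blast
  qed blast
qed

lemma hatP_scale:
  assumes Z: "(mzero, mzero) \<in> hatP P" and u: "u \<in> hatP P" and c: "c \<ge> 0"
  shows "pscale c u \<in> hatP P"
proof (cases "c = 0")
  case True
  then show ?thesis using Z by (cases u) simp
next
  case False
  then have c0: "c > 0" using c by simp
  have "\<exists>w\<in>{pscale c u | c u. c \<ge> 0 \<and> u \<in> P}. closeF F e (pscale c u) w" if F: "finite F" "F \<subseteq> cfuns" and e: "e > 0" for F e
  proof -
    have "e/c > 0" using e c0 by simp
    from hatP_D[OF u F this] obtain v where v: "v \<in> {pscale c u | c u. c \<ge> 0 \<and> u \<in> P}" "closeF F (e/c) u v"
      by blast
    then obtain d w where dw: "v = pscale d w" "d \<ge> 0" "w \<in> P" by blast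
    have "pscale c v = pscale (c * d) w" using dw by (cases w) simp
    then have "\<exists>c' w'. pscale c v = pscale c' w' \<and> 0 \<le> c' \<and> w' \<in> P" using dw c0
      by (intro exI[of _ "c*d"] exI[of _ w]) simp
    then have "pscale c v \<in> {pscale c u | c u. c \<ge> 0 \<and> u \<in> P}" by blast
    moreover have "closeF F e (pscale c u) (pscale c v)"
      unfolding closeF_def
    proof
      fix f assume "f \<in> F"
      then have h: "\<bar>fst u f - fst v f\<bar> < e / c" "\<bar>snd u f - snd v f\<bar> < e / c" using v(2) by (auto simp: closeF_def)
      have a: "\<bar>c * a - c * b\<bar> < e" if "\<bar>a - b\<bar> < e / c" for a b
      proof -
        have "\<bar>c * a - c * b\<bar> = c * \<bar>a - b\<bar>" using c0 by (simp add: abs_mult right_diff_distrib[symmetric])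
        also have "\<dots> < c * (e / c)" using that c0 by (intro mult_strict_left_mono) auto
        finally show ?thesis using c0 by simp
      qed
      show "\<bar>fst (pscale c u) f - fst (pscale c v) f\<bar> < e \<and> \<bar>snd (pscale c u) f - snd (pscale c v) f\<bar> < e"
        using a[OF h(1)] a[OF h(2)] by (simp add: pscale_def mscale_def)
    qed
    ultimately show ?thesis by blast
  qed
  moreover have "pscale c u \<in> Vsp" using u hatP_Vsp Vsp_pscale by blast
  ultimately show ?thesis by (intro hatP_I) auto
qed

lemma hatP_add:
  assumes th: "thermo_theory P" and Z: "(mzero, mzero) \<in> hatP P" and u: "u \<in> hatP P" and v: "v \<in> hatP P"
  shows "padd u v \<in> hatP P"
proof -
  from th have cv: "\<forall>u\<in>hatP P. \<forall>v\<in>hatP P. \<forall>t::real. 0 \<le> t \<and> t \<le> 1 \<longrightarrow> padd (pscale t u) (pscale (1 - t) v) \<in> hatP P"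
    unfolding thermo_theory_def by blast
  have "0 \<le> (1/2::real) \<and> (1/2::real) \<le> 1" by simp
  with cv u v have "padd (pscale (1/2) u) (pscale (1 - 1/2) v) \<in> hatP P" by blast
  then have "pscale 2 (padd (pscale (1/2) u) (pscale (1 - 1/2) v)) \<in> hatP P"
    by (rule hatP_scale[OF Z]) simp
  moreover have "pscale 2 (padd (pscale (1/2) u) (pscale (1 - 1/2) v)) = padd u v"
    by (cases u; cases v) (auto simp: pscale_def padd_def mscale_def madd_def algebra_simps)
  ultimately show ?thesis by simp
qed

lemma cd_hatP:
  assumes cd: "CD_pair P \<eta> T" and u: "u \<in> hatP P"
  shows "snd u (\<lambda>x. 1 / T x) \<le> fst u \<eta>"
proof -
  have eta: "\<eta> \<in> cfuns" and Tc: "T \<in> cfuns" and Tp: "\<And>x. 0 < T x"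
    and ineq: "\<And>dm q. (dm, q) \<in> P \<Longrightarrow> q (\<lambda>x. 1 / T x) \<le> dm \<eta>"
    using cd unfolding CD_pair_def by auto
  have iT: "(\<lambda>x. 1 / T x) \<in> cfuns" using Tc Tp unfolding cfuns_def
    by (auto intro!: continuous_intros simp: less_imp_neq[symmetric])
  have A: "snd u (\<lambda>x. 1 / T x) \<le> fst u \<eta> + 2 * e" if e: "e > 0" for e
  proof -
    have "finite {\<eta>, \<lambda>x. 1 / T x}" "{\<eta>, \<lambda>x. 1 / T x} \<subseteq> cfuns" using eta iT by auto
    from hatP_D[OF u this e] obtain v where v: "v \<in> {pscale c u | c u. c \<ge> 0 \<and> u \<in> P}" "closeF {\<eta>, \<lambda>x. 1 / T x} e u v"
      by blast
    then obtain c w where dw0: "v = pscale c w" "c \<ge> 0" "w \<in> P" by blast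
    obtain dm q where "w = (dm, q)" by (cases w)
    then have dw: "v = pscale c (dm, q)" "c \<ge> 0" "(dm, q) \<in> P" using dw0 by auto
    have "c * q (\<lambda>x. 1 / T x) \<le> c * dm \<eta>" using ineq[OF dw(3)] dw(2) by (rule mult_left_mono)
    then have "snd v (\<lambda>x. 1 / T x) \<le> fst v \<eta>" using dw(1) by (simp add: mscale_def)
    moreover have "\<bar>fst u \<eta> - fst v \<eta>\<bar> < e" "\<bar>snd u (\<lambda>x. 1 / T x) - snd v (\<lambda>x. 1 / T x)\<bar> < e"
      using v(2) by (auto simp: closeF_def)
    ultimately show ?thesis by linarith
  qed
  show ?thesis
  proof (rule field_le_epsilon)
    fix e :: real assume "0 < e"
    then show "snd u (\<lambda>x. 1 / T x) \<le> fst u \<eta> + e" using A[of "e/2"] by simp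
  qed
qed


lemma sum_pair_bool:
  fixes h :: "'b \<times> bool \<Rightarrow> real"
  shows "(\<Sum>i\<in>F \<times> UNIV. h i) = (\<Sum>f\<in>F. h (f, True)) + (\<Sum>f\<in>F. h (f, False))"
proof -
  have "(\<Sum>f\<in>F. \<Sum>b\<in>UNIV. h (f, b)) = (\<Sum>(x, y)\<in>F \<times> UNIV. h (x, y))"
    by (rule sum.cartesian_product)
  also have "\<dots> = (\<Sum>i\<in>F \<times> UNIV. h i)" by (simp add: case_prod_beta)
  finally have "(\<Sum>i\<in>F \<times> UNIV. h i) = (\<Sum>f\<in>F. \<Sum>b\<in>UNIV. h (f, b))" by simp
  also have "\<dots> = (\<Sum>f\<in>F. h (f, True) + h (f, False))" by (simp add: UNIV_bool add.commute)
  also have "\<dots> = (\<Sum>f\<in>F. h (f, True)) + (\<Sum>f\<in>F. h (f, False))" by (rule sum.distrib)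
  finally show ?thesis .
qed

lemma approx_gen:
  fixes A :: "('a::topological_space meas \<times> 'a meas) set" and t :: "'a meas \<times> 'a meas"
  assumes Am: "\<And>u. u\<in>A \<Longrightarrow> fst u \<in> meas \<and> snd u \<in> meas"
   and Aadd: "\<And>u v. u\<in>A \<Longrightarrow> v\<in>A \<Longrightarrow> padd u v \<in> A"
   and Ascl: "\<And>u c. u\<in>A \<Longrightarrow> 0 \<le> c \<Longrightarrow> pscale c u \<in> A"
   and A0: "(mzero, mzero) \<in> A"
   and tm: "fst t \<in> meas" "snd t \<in> meas"
   and cond: "\<And>G1 G2. G1\<in>cfuns \<Longrightarrow> G2\<in>cfuns \<Longrightarrow> (\<forall>u\<in>A. 0 \<le> fst u G1 + snd u G2) \<Longrightarrow> 0 \<le> fst t G1 + snd t G2"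
   and F: "finite F" "F \<subseteq> cfuns" and e: "e > 0"
  shows "\<exists>v\<in>A. closeF F e t v"
proof (rule ccontr)
  assume nc: "\<not> (\<exists>v\<in>A. closeF F e t v)"
  define \<Phi> where "\<Phi> u = (\<lambda>(f::'a\<Rightarrow>real, b::bool). if b then fst u f else snd u f)" for u :: "'a meas \<times> 'a meas"
  define I where "I = F \<times> (UNIV :: bool set)"
  have fI: "finite I" unfolding I_def using F(1) by simp
  have "\<exists>w. (\<forall>x\<in>\<Phi> ` A. 0 \<le> (\<Sum>i\<in>I. w i * x i)) \<and> (\<Sum>i\<in>I. w i * \<Phi> t i) < 0"
  proof (rule sep_finite[OF fI _ _ _ e])
    fix x y assume "x \<in> \<Phi> ` A" "y \<in> \<Phi> ` A"
    then obtain u v where uv: "u \<in> A" "v \<in> A" "x = \<Phi> u" "y = \<Phi> v" by blast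
    have "(\<lambda>i. x i + y i) = \<Phi> (padd u v)"
      unfolding uv \<Phi>_def by (auto simp: padd_def madd_def)
    then show "(\<lambda>i. x i + y i) \<in> \<Phi> ` A" using Aadd[OF uv(1,2)] by simp
  next
    fix x and c :: real assume "x \<in> \<Phi> ` A" "0 \<le> c"
    then obtain u where u: "u \<in> A" "x = \<Phi> u" by blast
    have "(\<lambda>i. c * x i) = \<Phi> (pscale c u)"
      unfolding u \<Phi>_def by (auto simp: pscale_def mscale_def)
    then show "(\<lambda>i. c * x i) \<in> \<Phi> ` A" using Ascl[OF u(1) \<open>0 \<le> c\<close>] by simp
  next
    have "(\<lambda>i. 0) = \<Phi> (mzero, mzero)" unfolding \<Phi>_def by (auto simp: mzero_def)
    then show "(\<lambda>i. 0) \<in> \<Phi> ` A" using A0 by simp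
  next
    fix x assume "x \<in> \<Phi> ` A"
    then obtain v where v: "v \<in> A" "x = \<Phi> v" by blast
    then have "\<not> closeF F e t v" using nc by blast
    then obtain f where f: "f \<in> F" "\<not> (\<bar>fst t f - fst v f\<bar> < e \<and> \<bar>snd t f - snd v f\<bar> < e)"
      unfolding closeF_def by blast
    show "\<exists>i\<in>I. e \<le> \<bar>x i - \<Phi> t i\<bar>"
    proof (cases "\<bar>fst t f - fst v f\<bar> < e")
      case True
      then have "e \<le> \<bar>x (f, False) - \<Phi> t (f, False)\<bar>" using f(2) unfolding v(2) \<Phi>_def by (simp add: abs_minus_commute)
      then show ?thesis using f(1) unfolding I_def by blast
    next
      case False
      then have "e \<le> \<bar>x (f, True) - \<Phi> t (f, True)\<bar>" unfolding v(2) \<Phi>_def by (simp add: abs_minus_commute)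
      then show ?thesis using f(1) unfolding I_def by blast
    qed
  qed
  then obtain w where w: "\<forall>x\<in>\<Phi> ` A. 0 \<le> (\<Sum>i\<in>I. w i * x i)" "(\<Sum>i\<in>I. w i * \<Phi> t i) < 0" by blast
  define G1 where "G1 = (\<lambda>x. \<Sum>f\<in>F. w (f, True) * f x)"
  define G2 where "G2 = (\<lambda>x. \<Sum>f\<in>F. w (f, False) * f x)"
  have G: "G1 \<in> cfuns" "G2 \<in> cfuns" unfolding G1_def G2_def using meas_sum(2)[OF mzero_meas F] by auto
  have key: "(\<Sum>i\<in>I. w i * \<Phi> u i) = fst u G1 + snd u G2" if "fst u \<in> meas" "snd u \<in> meas" for u
  proof -
    have "(\<Sum>i\<in>I. w i * \<Phi> u i) = (\<Sum>f\<in>F. w (f, True) * fst u f) + (\<Sum>f\<in>F. w (f, False) * snd u f)"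
      unfolding I_def by (subst sum_pair_bool) (simp add: \<Phi>_def)
    also have "\<dots> = fst u G1 + snd u G2"
      unfolding G1_def G2_def using meas_sum(1)[OF that(1) F] meas_sum(1)[OF that(2) F] by simp
    finally show ?thesis .
  qed
  have "\<forall>u\<in>A. 0 \<le> fst u G1 + snd u G2"
  proof
    fix u assume "u \<in> A"
    then show "0 \<le> fst u G1 + snd u G2" using w(1) key[of u] Am[of u] by auto
  qed
  then have "0 \<le> fst t G1 + snd t G2" using cond[OF G] by blast
  then show False using w(2) key[OF tm] by simp
qed


definition Lrev :: "('a::topological_space meas \<times> 'a meas) set \<Rightarrow> 'a meas \<Rightarrow> bool" where
  "Lrev P q \<longleftrightarrow> (mzero, q) \<in> hatP P \<and> (mzero, mscale (-1) q) \<in> hatP P"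

lemma KP_facts:
  assumes "kelvin_planck P"
  shows "thermo_theory P" "P \<subseteq> Vsp" "(mzero, mzero) \<in> hatP P"
proof -
  show th: "thermo_theory P" using assms by (simp add: kelvin_planck_def)
  then show "P \<subseteq> Vsp" by (simp add: thermo_theory_def)
  have "(mzero, mzero) \<in> hatP P \<inter> {(mzero, \<nu>) | \<nu>. \<nu> \<in> meas_plus}"
    using assms unfolding kelvin_planck_def by blast
  then show "(mzero, mzero) \<in> hatP P" by blast
qed

lemma Lrev_add:
  assumes th: "thermo_theory P" and Z: "(mzero, mzero) \<in> hatP P" and "Lrev P q1" "Lrev P q2"
  shows "Lrev P (madd q1 q2)"
proof -
  have "padd (mzero, q1) (mzero, q2) \<in> hatP P" "padd (mzero, mscale (-1) q1) (mzero, mscale (-1) q2) \<in> hatP P"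
    using hatP_add[OF th Z] assms(3,4) unfolding Lrev_def by blast+
  moreover have "madd (mscale (-1) q1) (mscale (-1) q2) = mscale (-1) (madd q1 q2)"
    by (auto simp: madd_def mscale_def)
  ultimately show ?thesis unfolding Lrev_def by simp
qed

lemma Lrev_scale:
  assumes Z: "(mzero, mzero) \<in> hatP P" and L: "Lrev P q"
  shows "Lrev P (mscale c q)"
proof (cases "0 \<le> c")
  case True
  have "pscale c (mzero, q) \<in> hatP P" "pscale c (mzero, mscale (-1) q) \<in> hatP P"
    using hatP_scale[OF Z _ True] L unfolding Lrev_def by blast+
  then show ?thesis unfolding Lrev_def by (simp add: mult.commute)
next
  case False
  then have c: "0 \<le> - c" by simp
  have "pscale (-c) (mzero, q) \<in> hatP P" "pscale (-c) (mzero, mscale (-1) q) \<in> hatP P"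
    using hatP_scale[OF Z _ c] L unfolding Lrev_def by blast+
  then show ?thesis unfolding Lrev_def by simp
qed

lemma Lrev_reversible: "reversible P (mzero, q) \<longleftrightarrow> Lrev P q"
  by (simp add: reversible_def Lrev_def)

lemma inv_T_cfuns: "T \<in> cfuns \<Longrightarrow> (\<And>x. 0 < T x) \<Longrightarrow> (\<lambda>x. 1 / T x) \<in> cfuns"
  unfolding cfuns_def by (auto intro!: continuous_intros simp: less_imp_neq[symmetric])

lemma CD_facts:
  assumes "CD_temp P T"
  obtains \<eta> where "CD_pair P \<eta> T" "\<eta> \<in> cfuns" "T \<in> cfuns" "\<And>x. 0 < T x" "(\<lambda>x. 1 / T x) \<in> cfuns"
  using assms inv_T_cfuns unfolding CD_temp_def CD_pair_def by blast

lemma scaled_dirac: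
  fixes s :: "'a::t2_space"
  assumes cpt: "compact (UNIV :: 'a set)" and c: "0 < c"
  shows "mscale c (dirac s) \<in> meas_plus" "mscale c (dirac s) \<noteq> mzero" "msupport (mscale c (dirac s)) \<subseteq> {s}"
    "mscale c (dirac s) \<in> meas"
proof -
  show m: "mscale c (dirac s) \<in> meas" using mscale_meas dirac_meas[OF cpt] by blast
  then show "mscale c (dirac s) \<in> meas_plus" using c unfolding meas_plus_def by (auto simp: mscale_def dirac_def)
  have "mscale c (dirac s) (\<lambda>_. 1) = c" by (simp add: mscale_def dirac_def)
  then show "mscale c (dirac s) \<noteq> mzero" using c by (auto simp: mzero_def)
  show "msupport (mscale c (dirac s)) \<subseteq> {s}" by (rule msupport_dirac)
qed

lemma same_hotness_refl:
  assumes Z: "(mzero, mzero) \<in> hatP P"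
  shows "same_hotness P s s"
proof -
  have "mdiff (dirac s) (dirac s) = mzero" by (auto simp: mdiff_def mzero_def)
  then show ?thesis using Z by (simp add: same_hotness_def)
qed

lemma hotness_levelsE:
  assumes "h \<in> hotness_levels P"
  obtains s where "h = {y. same_hotness P s y}"
  using assms unfolding hotness_levels_def by blast

lemma level_in: "{y. same_hotness P s y} \<in> hotness_levels P"
  unfolding hotness_levels_def by blast

definition Qc :: "('a::topological_space \<Rightarrow> real) \<Rightarrow> 'a \<Rightarrow> 'a \<Rightarrow> 'a meas" where
  "Qc T x y = mdiff (mscale (T x) (dirac x)) (mscale (T y) (dirac y))"

lemma Qc_meas: "compact (UNIV :: 'a::topological_space set) \<Longrightarrow> Qc T (x::'a) y \<in> meas"
  unfolding Qc_def by (intro mdiff_meas mscale_meas dirac_meas)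

lemma Qc_app: "f \<in> cfuns \<Longrightarrow> Qc T x y f = T x * f x - T y * f y"
  by (simp add: Qc_def mdiff_def mscale_def dirac_def)

lemma Qc_T:
  assumes "T \<in> cfuns" "\<And>x. 0 < T x"
  shows "Qc T x y (\<lambda>z. 1 / T z) = 0" "mscale (-1) (Qc T x y) (\<lambda>z. 1 / T z) = 0"
  using Qc_app[OF inv_T_cfuns[OF assms]] assms(2)[of x] assms(2)[of y]
  by (auto simp: mscale_def)

lemma ii_i:
  fixes P :: "('a::t2_space meas \<times> 'a meas) set" and T :: "'a \<Rightarrow> real"
  assumes cpt: "compact (UNIV :: 'a set)" and KP: "kelvin_planck P" and CD: "CD_temp P T"
    and ii: "\<forall>q\<in>meas. q (\<lambda>x. 1 / T x) = 0 \<longrightarrow> (mzero, q) \<in> hatP P"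
  shows "\<forall>T'. CD_temp P T' \<longrightarrow> (\<exists>c>0. \<forall>x. T' x = c * T x)"
proof (intro allI impI)
  fix T' assume CD': "CD_temp P T'"
  obtain \<eta> where T: "T \<in> cfuns" "\<And>x. 0 < T x" using CD_facts[OF CD] by blast
  obtain \<eta>' where T': "CD_pair P \<eta>' T'" "T' \<in> cfuns" "\<And>x. 0 < T' x" "(\<lambda>x. 1 / T' x) \<in> cfuns"
    using CD_facts[OF CD'] by blast
  define x0 :: 'a where "x0 = undefined"
  have eq: "T x / T' x = T x0 / T' x0" for x
  proof -
    have "(mzero, Qc T x x0) \<in> hatP P" using ii Qc_meas[OF cpt] Qc_T[OF T] by blast
    from cd_hatP[OF T'(1) this] have a: "Qc T x x0 (\<lambda>z. 1 / T' z) \<le> 0" by (simp add: mzero_def)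
    have "(mzero, mscale (-1) (Qc T x x0)) \<in> hatP P" using ii Qc_meas[OF cpt] mscale_meas Qc_T[OF T] by blast
    from cd_hatP[OF T'(1) this] have b: "- Qc T x x0 (\<lambda>z. 1 / T' z) \<le> 0" by (simp add: mzero_def mscale_def)
    have "Qc T x x0 (\<lambda>z. 1 / T' z) = 0" using a b by simp
    then show ?thesis using Qc_app[OF T'(4)] by simp
  qed
  show "\<exists>c>0. \<forall>x. T' x = c * T x"
  proof (intro exI conjI allI)
    show "0 < T' x0 / T x0" using T(2) T'(3) by simp
    fix x
    have "T' x = T x * (T' x0 / T x0)"
      using eq[of x] T(2)[of x] T'(3)[of x] T(2)[of x0] T'(3)[of x0] by (simp add: field_simps)
    then show "T' x = T' x0 / T x0 * T x" by simp
  qed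
qed

lemma ii_iii:
  fixes P :: "('a::t2_space meas \<times> 'a meas) set" and T :: "'a \<Rightarrow> real"
  assumes cpt: "compact (UNIV :: 'a set)" and KP: "kelvin_planck P" and CD: "CD_temp P T"
    and ii: "\<forall>q\<in>meas. q (\<lambda>x. 1 / T x) = 0 \<longrightarrow> (mzero, q) \<in> hatP P"
  shows "\<forall>h'\<in>hotness_levels P. \<forall>h\<in>hotness_levels P. \<exists>u. carnot_between P h' h u"
proof (intro ballI)
  fix h' h assume "h' \<in> hotness_levels P" "h \<in> hotness_levels P"
  then obtain s' s where hs: "h' = {y. same_hotness P s' y}" "h = {y. same_hotness P s y}"
    using hotness_levelsE by metis
  obtain \<eta> where T: "T \<in> cfuns" "\<And>x. 0 < T x" using CD_facts[OF CD] by blast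
  have Z: "(mzero, mzero) \<in> hatP P" using KP_facts[OF KP] by blast
  have L: "Lrev P (Qc T s' s)" unfolding Lrev_def
    using ii Qc_meas[OF cpt] mscale_meas Qc_T[OF T] by blast
  have sub: "msupport (mscale (T s') (dirac s')) \<subseteq> h'" "msupport (mscale (T s) (dirac s)) \<subseteq> h"
    using scaled_dirac(3)[OF cpt T(2)] same_hotness_refl[OF Z] hs by blast+
  show "\<exists>u. carnot_between P h' h u"
    unfolding carnot_between_def
  proof (intro exI conjI)
    show "reversible P (mzero, Qc T s' s)" using L Lrev_reversible by blast
    show "cyclic P (mzero, Qc T s' s)" using L unfolding cyclic_def Lrev_def by simp
    show "snd (mzero, Qc T s' s) = mdiff (mscale (T s') (dirac s')) (mscale (T s) (dirac s))"
      by (simp add: Qc_def)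
  qed (use scaled_dirac[OF cpt T(2)] sub in auto)
qed


lemma Lrev_mzero: "(mzero, mzero) \<in> hatP P \<Longrightarrow> Lrev P mzero"
  by (simp add: Lrev_def)

lemma Lrev_meas: "Lrev P q \<Longrightarrow> q \<in> meas"
proof -
  assume "Lrev P q"
  then have "(mzero, q) \<in> Vsp" using hatP_Vsp[of P] unfolding Lrev_def by blast
  then show ?thesis by (simp add: Vsp_iff)
qed

lemma iv_ii:
  fixes P :: "('a::t2_space meas \<times> 'a meas) set" and T :: "'a \<Rightarrow> real"
  assumes cpt: "compact (UNIV :: 'a set)" and KP: "kelvin_planck P" and CD: "CD_temp P T"
    and iv: "\<forall>\<sigma>' \<sigma>. \<exists>c' c. 0 < c' \<and> 0 < c \<and> c' / c = T \<sigma>' / T \<sigma> \<and>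
                 carnot P (mzero, mdiff (mscale c' (dirac \<sigma>')) (mscale c (dirac \<sigma>)))"
  shows "\<forall>q\<in>meas. q (\<lambda>x. 1 / T x) = 0 \<longrightarrow> (mzero, q) \<in> hatP P"
proof (intro ballI impI)
  fix q :: "'a meas" assume q: "q \<in> meas" "q (\<lambda>x. 1 / T x) = 0"
  obtain \<eta> where T: "T \<in> cfuns" "\<And>x. 0 < T x" "(\<lambda>x. 1 / T x) \<in> cfuns" using CD_facts[OF CD] by blast
  have th: "thermo_theory P" and Z: "(mzero, mzero) \<in> hatP P" using KP_facts[OF KP] by blast+
  define x0 :: 'a where "x0 = undefined"
  have LQ: "Lrev P (Qc T x x0)" for x
  proof -
    obtain c' c where cc: "0 < c'" "0 < c" "c' / c = T x / T x0"
      and car: "carnot P (mzero, mdiff (mscale c' (dirac x)) (mscale c (dirac x0)))"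
      using iv by blast
    have "reversible P (mzero, mdiff (mscale c' (dirac x)) (mscale c (dirac x0)))"
      using car unfolding carnot_def carnot_between_def by blast
    then have "Lrev P (mdiff (mscale c' (dirac x)) (mscale c (dirac x0)))" by (simp add: Lrev_reversible)
    then have L: "Lrev P (mscale (T x0 / c) (mdiff (mscale c' (dirac x)) (mscale c (dirac x0))))"
      by (rule Lrev_scale[OF Z])
    have c': "c' = c * T x / T x0" using cc T(2)[of x0] by (simp add: field_simps)
    have "mscale (T x0 / c) (mdiff (mscale c' (dirac x)) (mscale c (dirac x0))) = Qc T x x0"
    proof (rule ext)
      fix f
      have "c \<noteq> 0" "T x0 \<noteq> 0" using cc(2) T(2)[of x0] by auto
      then show "mscale (T x0 / c) (mdiff (mscale c' (dirac x)) (mscale c (dirac x0))) f = Qc T x x0 f"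
        unfolding Qc_def mscale_def mdiff_def c' by (simp add: field_simps)
    qed
    then show ?thesis using L by simp
  qed
  define A :: "('a meas \<times> 'a meas) set" where "A = {(mzero, \<nu>) | \<nu>. Lrev P \<nu>}"
  have approx: "\<exists>v\<in>A. closeF F e (mzero, q) v" if F: "finite F" "F \<subseteq> cfuns" and e: "e > 0" for F e
  proof (rule approx_gen[where A=A and t="(mzero, q)", OF _ _ _ _ _ _ _ F e])
    show "fst u \<in> meas \<and> snd u \<in> meas" if "u \<in> A" for u
    proof -
      obtain \<nu> where "u = (mzero, \<nu>)" "Lrev P \<nu>" using \<open>u \<in> A\<close> unfolding A_def by blast
      then show ?thesis using Lrev_meas by simp
    qed
    show "padd u v \<in> A" if uvA: "u \<in> A" "v \<in> A" for u v
    proof -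
      obtain a b where "u = (mzero, a)" "Lrev P a" "v = (mzero, b)" "Lrev P b" using uvA unfolding A_def by blast
      then show ?thesis using Lrev_add[OF th Z, of a b] unfolding A_def by simp
    qed
    show "pscale c u \<in> A" if uA: "u \<in> A" "0 \<le> c" for u c
    proof -
      obtain a where "u = (mzero, a)" "Lrev P a" using uA unfolding A_def by blast
      then show ?thesis using Lrev_scale[OF Z, of a c] unfolding A_def by simp
    qed
    show "(mzero, mzero) \<in> A" using Lrev_mzero[OF Z] unfolding A_def by simp
    show "fst (mzero, q) \<in> meas" "snd (mzero, q) \<in> meas" using q by simp_all
    fix G1 G2 assume G: "G1 \<in> cfuns" "G2 \<in> cfuns" and pos: "\<forall>u\<in>A. 0 \<le> fst u G1 + snd u G2"
    have nu0: "\<nu> G2 = 0" if "Lrev P \<nu>" for \<nu>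
    proof -
      have a1: "(mzero, \<nu>) \<in> A" and a2: "(mzero, mscale (-1) \<nu>) \<in> A" using that Lrev_scale[OF Z that] unfolding A_def by simp_all
      have "0 \<le> fst (mzero, \<nu>) G1 + snd (mzero, \<nu>) G2" "0 \<le> fst (mzero, mscale (-1) \<nu>) G1 + snd (mzero, mscale (-1) \<nu>) G2"
        using bspec[OF pos a1] bspec[OF pos a2] by simp_all
      then have "0 \<le> \<nu> G2" "0 \<le> - \<nu> G2" by (simp_all add: mzero_def mscale_def)
      then show ?thesis by simp
    qed
    have G2eq: "G2 x = (T x0 * G2 x0) * (1 / T x)" for x
    proof -
      have e1: "T x * G2 x = T x0 * G2 x0" using nu0[OF LQ[of x]] Qc_app[OF G(2), of T x x0] by simp
      have "T x \<noteq> 0" using T(2)[of x] by simp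
      then show ?thesis by (simp add: e1[symmetric])
    qed
    have "q G2 = (T x0 * G2 x0) * q (\<lambda>x. 1 / T x)" by (rule meas_scale[OF q(1) T(3)]) (rule G2eq)
    then show "0 \<le> fst (mzero, q) G1 + snd (mzero, q) G2" using q(2) by (simp add: mzero_def)
  qed
  show "(mzero, q) \<in> hatP P"
  proof (rule hatP_closed)
    show "(mzero, q) \<in> Vsp" using q by (simp add: Vsp_iff) (simp add: mzero_def)
    fix F :: "('a \<Rightarrow> real) set" and e :: real assume "finite F" "F \<subseteq> cfuns" "e > 0"
    then obtain v where "v \<in> A" "closeF F e (mzero, q) v" using approx by blast
    moreover have "v \<in> hatP P" using \<open>v \<in> A\<close> unfolding A_def Lrev_def by auto
    ultimately show "\<exists>v\<in>hatP P. closeF F e (mzero, q) v" by blast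
  qed
qed


lemma level_move:
  fixes P :: "('a::t2_space meas \<times> 'a meas) set" and s :: 'a
  assumes cpt: "compact (UNIV :: 'a set)" and KP: "kelvin_planck P"
    and mu: "\<mu>0 \<in> meas_plus" and sup: "msupport \<mu>0 \<subseteq> {y. same_hotness P s y}"
  shows "Lrev P (mdiff \<mu>0 (mscale (\<mu>0 (\<lambda>_. 1)) (dirac s)))"
proof -
  have th: "thermo_theory P" and Z: "(mzero, mzero) \<in> hatP P" using KP_facts[OF KP] by blast+
  have m0: "\<mu>0 \<in> meas" using mu by (rule meas_plus_meas)
  define r where "r \<nu> = mdiff \<nu> (mscale (\<nu> (\<lambda>_. 1)) (dirac s))" for \<nu> :: "'a meas"
  have r_app: "r \<nu> f = \<nu> f - \<nu> (\<lambda>_. 1) * f s" if "f \<in> cfuns" for \<nu> f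
    using that by (simp add: r_def mdiff_def mscale_def dirac_def)
  have r_meas: "r \<nu> \<in> meas" if "\<nu> \<in> meas" for \<nu>
    unfolding r_def using that by (intro mdiff_meas mscale_meas dirac_meas[OF cpt])
  have r_add: "r (madd a b) = madd (r a) (r b)" for a b
    by (rule ext) (simp add: r_def madd_def mdiff_def mscale_def algebra_simps)
  have r_scl: "r (mscale c a) = mscale c (r a)" for a c
    by (rule ext) (simp add: r_def mdiff_def mscale_def algebra_simps)
  have r_zero: "r mzero = mzero"
    by (rule ext) (simp add: r_def mdiff_def mscale_def mzero_def)
  have r_dirac: "r (dirac x) = mdiff (dirac x) (dirac s)" for x
    by (rule ext) (simp add: r_def mdiff_def mscale_def dirac_def)
  define A :: "('a meas \<times> 'a meas) set" where "A = {(mzero, \<nu>) | \<nu>. \<nu> \<in> meas \<and> Lrev P (r \<nu>)}"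
  have approx: "\<exists>v\<in>A. closeF F e (mzero, \<mu>0) v" if F: "finite F" "F \<subseteq> cfuns" and e: "e > 0" for F e
  proof (rule approx_gen[where A=A and t="(mzero, \<mu>0)", OF _ _ _ _ _ _ _ F e])
    show "fst u \<in> meas \<and> snd u \<in> meas" if uA: "u \<in> A" for u
    proof -
      obtain \<nu> where "u = (mzero, \<nu>)" "\<nu> \<in> meas" using uA unfolding A_def by blast
      then show ?thesis by simp
    qed
    show "padd u v \<in> A" if uvA: "u \<in> A" "v \<in> A" for u v
    proof -
      obtain a b where ab: "u = (mzero, a)" "a \<in> meas" "Lrev P (r a)" "v = (mzero, b)" "b \<in> meas" "Lrev P (r b)"
        using uvA unfolding A_def by blast
      have "Lrev P (r (madd a b))" unfolding r_add by (rule Lrev_add[OF th Z ab(3) ab(6)])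
      then show ?thesis using ab madd_meas[OF ab(2) ab(5)] unfolding A_def by simp
    qed
    show "pscale c u \<in> A" if uA: "u \<in> A" "0 \<le> c" for u c
    proof -
      obtain a where ab: "u = (mzero, a)" "a \<in> meas" "Lrev P (r a)" using uA unfolding A_def by blast
      have "Lrev P (r (mscale c a))" unfolding r_scl by (rule Lrev_scale[OF Z ab(3)])
      then show ?thesis using ab mscale_meas[OF ab(2)] unfolding A_def by simp
    qed
    show "(mzero, mzero) \<in> A" using Lrev_mzero[OF Z] r_zero unfolding A_def by simp
    show "fst (mzero, \<mu>0) \<in> meas" "snd (mzero, \<mu>0) \<in> meas" using m0 by simp_all
    fix G1 G2 assume G: "G1 \<in> cfuns" "G2 \<in> cfuns" and pos: "\<forall>u\<in>A. 0 \<le> fst u G1 + snd u G2"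
    have "0 \<le> G2 x" if x: "x \<in> msupport \<mu>0" for x
    proof -
      have sh: "same_hotness P s x" using sup x by blast
      have "mscale (-1) (mdiff (dirac x) (dirac s)) = mdiff (dirac s) (dirac x)"
        by (rule ext) (simp add: mscale_def mdiff_def)
      then have "Lrev P (r (dirac x))" using sh unfolding r_dirac Lrev_def same_hotness_def by simp
      then have a1: "(mzero, dirac x) \<in> A" using dirac_meas[OF cpt] unfolding A_def by simp
      show ?thesis using bspec[OF pos a1] G(2) by (simp add: mzero_def dirac_def)
    qed
    then have "0 \<le> \<mu>0 G2" by (rule support_pos[OF cpt mu G(2)])
    then show "0 \<le> fst (mzero, \<mu>0) G1 + snd (mzero, \<mu>0) G2" by (simp add: mzero_def)
  qed
  have close: "\<exists>\<nu>. \<nu> \<in> meas \<and> Lrev P (r \<nu>) \<and> (\<forall>f\<in>F. \<bar>r \<mu>0 f - r \<nu> f\<bar> < e)"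
    if F: "finite F" "F \<subseteq> cfuns" and e: "e > 0" for F e
  proof -
    define S where "S = (\<Sum>f\<in>F. \<bar>f s\<bar>)"
    have S0: "0 \<le> S" unfolding S_def by (simp add: sum_nonneg)
    have fS: "\<bar>f s\<bar> \<le> S" if "f \<in> F" for f
      unfolding S_def using F(1) that by (intro member_le_sum) auto
    define e' where "e' = e / (2 * (S + 1))"
    have e'0: "0 < e'" unfolding e'_def using e S0 by simp
    have e'S: "e' + e' * S < e"
    proof -
      have "e' + e' * S = e' * (S + 1)" by (simp add: algebra_simps)
      also have "\<dots> = e / 2" unfolding e'_def using S0 by (simp add: field_simps)
      finally show ?thesis using e by simp
    qed
    have F': "finite (insert (\<lambda>_. 1) F)" "insert (\<lambda>_. 1) F \<subseteq> cfuns" using F by auto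
    obtain v where v: "v \<in> A" "closeF (insert (\<lambda>_. 1) F) e' (mzero, \<mu>0) v"
      using approx[OF F' e'0] by blast
    then obtain \<nu> where nu: "v = (mzero, \<nu>)" "\<nu> \<in> meas" "Lrev P (r \<nu>)" unfolding A_def by blast
    have c1: "\<bar>\<mu>0 (\<lambda>_. 1) - \<nu> (\<lambda>_. 1)\<bar> < e'" using v(2) nu(1) unfolding closeF_def by simp
    have "\<bar>r \<mu>0 f - r \<nu> f\<bar> < e" if f: "f \<in> F" for f
    proof -
      have cf: "\<bar>\<mu>0 f - \<nu> f\<bar> < e'" using v(2) nu(1) f unfolding closeF_def by simp
      have fc: "f \<in> cfuns" using F f by blast
      have "r \<mu>0 f - r \<nu> f = (\<mu>0 f - \<nu> f) - (\<mu>0 (\<lambda>_. 1) - \<nu> (\<lambda>_. 1)) * f s"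
        using r_app[OF fc] by (simp add: algebra_simps)
      then have "\<bar>r \<mu>0 f - r \<nu> f\<bar> \<le> \<bar>\<mu>0 f - \<nu> f\<bar> + \<bar>\<mu>0 (\<lambda>_. 1) - \<nu> (\<lambda>_. 1)\<bar> * \<bar>f s\<bar>"
        by (simp add: abs_mult[symmetric] abs_triangle_ineq4)
      also have "\<dots> \<le> e' + e' * S"
        using cf c1 fS[OF f] by (intro add_mono mult_mono) auto
      finally show ?thesis using e'S by simp
    qed
    then show ?thesis using nu by blast
  qed
  have Vr: "(mzero, r \<mu>0) \<in> Vsp" "(mzero, mscale (-1) (r \<mu>0)) \<in> Vsp"
    using r_meas[OF m0] mscale_meas[OF r_meas[OF m0]] by (simp_all add: Vsp_iff) (simp_all add: mzero_def)
  have "(mzero, r \<mu>0) \<in> hatP P"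
  proof (rule hatP_closed[OF Vr(1)])
    fix F :: "('a \<Rightarrow> real) set" and e :: real assume Fe: "finite F" "F \<subseteq> cfuns" "e > 0"
    then obtain \<nu> where nu: "Lrev P (r \<nu>)" "\<forall>f\<in>F. \<bar>r \<mu>0 f - r \<nu> f\<bar> < e" using close by blast
    have "closeF F e (mzero, r \<mu>0) (mzero, r \<nu>)" using nu(2) Fe(3) unfolding closeF_def by simp
    moreover have "(mzero, r \<nu>) \<in> hatP P" using nu(1) unfolding Lrev_def by simp
    ultimately show "\<exists>v\<in>hatP P. closeF F e (mzero, r \<mu>0) v" by blast
  qed
  moreover have "(mzero, mscale (-1) (r \<mu>0)) \<in> hatP P"
  proof (rule hatP_closed[OF Vr(2)])
    fix F :: "('a \<Rightarrow> real) set" and e :: real assume Fe: "finite F" "F \<subseteq> cfuns" "e > 0"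
    then obtain \<nu> where nu: "Lrev P (r \<nu>)" "\<forall>f\<in>F. \<bar>r \<mu>0 f - r \<nu> f\<bar> < e" using close by blast
    have "\<bar>- r \<mu>0 f - - r \<nu> f\<bar> < e" if "f \<in> F" for f using nu(2) that by (simp add: abs_minus_commute)
    then have "closeF F e (mzero, mscale (-1) (r \<mu>0)) (mzero, mscale (-1) (r \<nu>))" using Fe(3) unfolding closeF_def by (simp add: mscale_def)
    moreover have "(mzero, mscale (-1) (r \<nu>)) \<in> hatP P" using nu(1) unfolding Lrev_def by simp
    ultimately show "\<exists>v\<in>hatP P. closeF F e (mzero, mscale (-1) (r \<mu>0)) v" by blast
  qed
  ultimately show ?thesis unfolding Lrev_def r_def by simp
qed


lemma carnot_from_Lrev:
  fixes P :: "('a::t2_space meas \<times> 'a meas) set"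
  assumes cpt: "compact (UNIV :: 'a set)" and Z: "(mzero, mzero) \<in> hatP P"
    and L: "Lrev P (mdiff (mscale c' (dirac \<sigma>')) (mscale c (dirac \<sigma>)))" and c: "0 < c'" "0 < c"
  shows "carnot_between P {y. same_hotness P \<sigma>' y} {y. same_hotness P \<sigma> y} (mzero, mdiff (mscale c' (dirac \<sigma>')) (mscale c (dirac \<sigma>)))"
proof -
  have sub: "msupport (mscale c' (dirac \<sigma>')) \<subseteq> {y. same_hotness P \<sigma>' y}" "msupport (mscale c (dirac \<sigma>)) \<subseteq> {y. same_hotness P \<sigma> y}"
    using scaled_dirac(3)[OF cpt c(1), of \<sigma>'] scaled_dirac(3)[OF cpt c(2), of \<sigma>] same_hotness_refl[OF Z] by blast+
  show ?thesis
    unfolding carnot_between_def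
  proof (intro exI conjI)
    show "reversible P (mzero, mdiff (mscale c' (dirac \<sigma>')) (mscale c (dirac \<sigma>)))" using L Lrev_reversible by blast
    show "cyclic P (mzero, mdiff (mscale c' (dirac \<sigma>')) (mscale c (dirac \<sigma>)))" using L unfolding cyclic_def Lrev_def by simp
    show "snd (mzero, mdiff (mscale c' (dirac \<sigma>')) (mscale c (dirac \<sigma>))) = mdiff (mscale c' (dirac \<sigma>')) (mscale c (dirac \<sigma>))"
      by simp
  qed (use scaled_dirac[OF cpt c(1)] scaled_dirac[OF cpt c(2)] sub in auto)
qed

lemma iii_iv:
  fixes P :: "('a::t2_space meas \<times> 'a meas) set" and T :: "'a \<Rightarrow> real"
  assumes cpt: "compact (UNIV :: 'a set)" and KP: "kelvin_planck P" and CD: "CD_temp P T"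
    and iii: "\<forall>h'\<in>hotness_levels P. \<forall>h\<in>hotness_levels P. \<exists>u. carnot_between P h' h u"
  shows "\<forall>\<sigma>' \<sigma>. \<exists>c' c. 0 < c' \<and> 0 < c \<and> c' / c = T \<sigma>' / T \<sigma> \<and>
                 carnot P (mzero, mdiff (mscale c' (dirac \<sigma>')) (mscale c (dirac \<sigma>)))"
proof (intro allI)
  fix \<sigma>' \<sigma> :: 'a
  have th: "thermo_theory P" and Z: "(mzero, mzero) \<in> hatP P" using KP_facts[OF KP] by blast+
  obtain \<eta> where T: "CD_pair P \<eta> T" "T \<in> cfuns" "\<And>x. 0 < T x" "(\<lambda>x. 1 / T x) \<in> cfuns"
    using CD_facts[OF CD] by blast
  obtain u where cb: "carnot_between P {y. same_hotness P \<sigma>' y} {y. same_hotness P \<sigma> y} u"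
    using iii level_in by blast
  then obtain \<mu>' \<mu> where u: "reversible P u" "cyclic P u" "\<mu>' \<in> meas_plus" "\<mu> \<in> meas_plus" "\<mu>' \<noteq> mzero" "\<mu> \<noteq> mzero"
    "msupport \<mu>' \<subseteq> {y. same_hotness P \<sigma>' y}" "msupport \<mu> \<subseteq> {y. same_hotness P \<sigma> y}" "snd u = mdiff \<mu>' \<mu>"
    unfolding carnot_between_def by blast
  have "u = (mzero, mdiff \<mu>' \<mu>)" using u(2,9) unfolding cyclic_def by (cases u) simp
  then have "reversible P (mzero, mdiff \<mu>' \<mu>)" using u(1) by simp
  then have L0: "Lrev P (mdiff \<mu>' \<mu>)" using Lrev_reversible by blast
  define c' where "c' = \<mu>' (\<lambda>_. 1)"
  define c where "c = \<mu> (\<lambda>_. 1)"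
  have c0: "0 < c'" "0 < c" unfolding c'_def c_def using meas_plus_one_pos[OF cpt] u(3-6) by auto
  have L1: "Lrev P (mdiff \<mu>' (mscale c' (dirac \<sigma>')))" unfolding c'_def by (rule level_move[OF cpt KP u(3,7)])
  have L2: "Lrev P (mdiff \<mu> (mscale c (dirac \<sigma>)))" unfolding c_def by (rule level_move[OF cpt KP u(4,8)])
  define Q where "Q = mdiff (mscale c' (dirac \<sigma>')) (mscale c (dirac \<sigma>))"
  have "Q = madd (madd (mdiff \<mu>' \<mu>) (mscale (-1) (mdiff \<mu>' (mscale c' (dirac \<sigma>'))))) (mdiff \<mu> (mscale c (dirac \<sigma>)))"
    unfolding Q_def by (rule ext) (simp add: madd_def mdiff_def mscale_def algebra_simps)
  then have LQ: "Lrev P Q" using Lrev_add[OF th Z] Lrev_scale[OF Z] L0 L1 L2 by metis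
  have a: "Q (\<lambda>x. 1 / T x) \<le> 0" using cd_hatP[OF T(1), of "(mzero, Q)"] LQ unfolding Lrev_def by (simp add: mzero_def)
  have b: "- Q (\<lambda>x. 1 / T x) \<le> 0" using cd_hatP[OF T(1), of "(mzero, mscale (-1) Q)"] LQ unfolding Lrev_def by (simp add: mzero_def mscale_def)
  have "Q (\<lambda>x. 1 / T x) = c' * (1 / T \<sigma>') - c * (1 / T \<sigma>)" unfolding Q_def using T(4) by (simp add: mdiff_def mscale_def dirac_def)
  then have "c' * (1 / T \<sigma>') = c * (1 / T \<sigma>)" using a b by simp
  then have ratio: "c' / c = T \<sigma>' / T \<sigma>" using c0 T(3)[of \<sigma>] T(3)[of \<sigma>'] by (simp add: field_simps)
  have "carnot P (mzero, Q)"
    unfolding carnot_def using carnot_from_Lrev[OF cpt Z LQ[unfolded Q_def] c0] level_in unfolding Q_def by blast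
  then show "\<exists>c' c. 0 < c' \<and> 0 < c \<and> c' / c = T \<sigma>' / T \<sigma> \<and> carnot P (mzero, mdiff (mscale c' (dirac \<sigma>')) (mscale c (dirac \<sigma>)))"
    using c0 ratio unfolding Q_def by blast
qed


lemma i_ii:
  fixes P :: "('a::t2_space meas \<times> 'a meas) set" and T :: "'a \<Rightarrow> real"
  assumes cpt: "compact (UNIV :: 'a set)" and KP: "kelvin_planck P" and CD: "CD_temp P T"
    and i: "\<forall>T'. CD_temp P T' \<longrightarrow> (\<exists>c>0. \<forall>x. T' x = c * T x)"
  shows "\<forall>q\<in>meas. q (\<lambda>x. 1 / T x) = 0 \<longrightarrow> (mzero, q) \<in> hatP P"
proof (intro ballI impI)
  fix q :: "'a meas" assume q: "q \<in> meas" "q (\<lambda>x. 1 / T x) = 0"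
  have th: "thermo_theory P" and PV: "P \<subseteq> Vsp" and Z: "(mzero, mzero) \<in> hatP P" using KP_facts[OF KP] by blast+
  obtain \<eta> where T: "CD_pair P \<eta> T" "\<eta> \<in> cfuns" "T \<in> cfuns" "\<And>x. 0 < T x" "(\<lambda>x. 1 / T x) \<in> cfuns"
    using CD_facts[OF CD] by blast
  have approx: "\<exists>v\<in>hatP P. closeF F e (mzero, q) v" if F: "finite F" "F \<subseteq> cfuns" and e: "e > 0" for F e
  proof (rule approx_gen[where A="hatP P" and t="(mzero, q)", OF _ _ _ _ _ _ _ F e])
    show "fst u \<in> meas \<and> snd u \<in> meas" if uA: "u \<in> hatP P" for u
    proof -
      have "u \<in> Vsp" using hatP_Vsp[of P] uA by blast
      then show ?thesis by (simp add: Vsp_iff)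
    qed
    show "padd u v \<in> hatP P" if "u \<in> hatP P" "v \<in> hatP P" for u v
      using hatP_add[OF th Z that] .
    show "pscale c u \<in> hatP P" if "u \<in> hatP P" "0 \<le> c" for u c
      using hatP_scale[OF Z that] .
    show "(mzero, mzero) \<in> hatP P" by (rule Z)
    show "fst (mzero, q) \<in> meas" "snd (mzero, q) \<in> meas" using q by simp_all
    fix G1 G2 assume G: "G1 \<in> cfuns" "G2 \<in> cfuns" and pos: "\<forall>u\<in>hatP P. 0 \<le> fst u G1 + snd u G2"
    have "0 \<le> q G2"
    proof (rule ccontr)
      assume "\<not> 0 \<le> q G2"
      then have qneg: "q G2 < 0" by simp
      obtain M where M: "\<And>x. \<bar>T x\<bar> \<le> M" using cfun_max[OF cpt T(3)] by blast
      obtain B where B: "\<And>x. \<bar>G2 x\<bar> \<le> B" using cfun_max[OF cpt G(2)] by blast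
      have M0: "0 < M" using M[of undefined] T(4)[of undefined] by simp
      have B0: "0 \<le> B" using B[of undefined] by simp
      define lam where "lam = 1 / (2 * M * (B + 1))"
      have lam0: "0 < lam" unfolding lam_def using M0 B0 by simp
      have lamB: "lam * (B + 1) = 1 / (2 * M)"
      proof -
        have "B + 1 \<noteq> 0" using B0 by simp
        then show ?thesis unfolding lam_def by simp
      qed
      define D where "D x = 1 / T x - lam * G2 x" for x
      have Dpos: "0 < D x" for x
      proof -
        have "lam * G2 x \<le> lam * B" using B[of x] lam0 by (intro mult_left_mono) auto
        also have "\<dots> \<le> lam * (B + 1)" using lam0 by simp
        also have "\<dots> < 1 / M" using lamB M0 by (simp add: field_simps)
        also have "1 / M \<le> 1 / T x" using M[of x] T(4)[of x] by (simp add: frac_le)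
        finally show ?thesis unfolding D_def by simp
      qed
      have Dc: "D \<in> cfuns"
      proof -
        have "(\<lambda>x. 1 * (1 / T x) + (- lam) * G2 x) \<in> cfuns" by (rule cfuns_lin[OF T(5) G(2)])
        moreover have "(\<lambda>x. 1 * (1 / T x) + (- lam) * G2 x) = D" unfolding D_def by (rule ext) simp
        ultimately show ?thesis by simp
      qed
      define T2 where "T2 x = 1 / D x" for x
      have T2c: "T2 \<in> cfuns" using Dc Dpos unfolding T2_def cfuns_def
        by (auto intro!: continuous_intros simp: less_imp_neq[symmetric])
      have T2pos: "0 < T2 x" for x unfolding T2_def using Dpos[of x] by simp
      have invT2: "(\<lambda>x. 1 / T2 x) = (\<lambda>x. 1 * (1 / T x) + (- lam) * G2 x)"
        unfolding T2_def D_def by (rule ext) simp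
      define \<eta>2 where "\<eta>2 x = 1 * \<eta> x + lam * G1 x" for x
      have eta2c: "\<eta>2 \<in> cfuns" unfolding \<eta>2_def[abs_def] by (rule cfuns_lin[OF T(2) G(1)])
      have "CD_pair P \<eta>2 T2"
        unfolding CD_pair_def
      proof (intro conjI ballI allI T2pos eta2c T2c)
        fix w assume wP: "w \<in> P"
        obtain dm \<nu> where w: "w = (dm, \<nu>)" by (cases w)
        have "(dm, \<nu>) \<in> Vsp" using PV wP w by blast
        then have wV: "dm \<in> meas" "\<nu> \<in> meas" by (simp_all add: Vsp_iff)
        have "w \<in> hatP P" using P_hatP[OF PV] wP by blast
        then have p: "0 \<le> dm G1 + \<nu> G2" using pos w by auto
        have c1: "\<nu> (\<lambda>x. 1 / T x) \<le> dm \<eta>" using T(1) wP w unfolding CD_pair_def by auto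
        have e1: "dm \<eta>2 = 1 * dm \<eta> + lam * dm G1" by (rule meas_lin[OF wV(1) T(2) G(1)]) (simp add: \<eta>2_def)
        have e2: "\<nu> (\<lambda>x. 1 / T2 x) = 1 * \<nu> (\<lambda>x. 1 / T x) + (- lam) * \<nu> G2"
          unfolding invT2 by (rule meas_lin[OF wV(2) T(5) G(2)]) simp
        have "0 \<le> lam * (dm G1 + \<nu> G2)" using lam0 p by simp
        then have "\<nu> (\<lambda>x. 1 / T2 x) \<le> dm \<eta>2" using e1 e2 c1 by (simp add: algebra_simps)
        then show "case w of (dm, q) \<Rightarrow> q (\<lambda>x. 1 / T2 x) \<le> dm \<eta>2" using w by simp
      qed
      then have "CD_temp P T2" unfolding CD_temp_def by blast
      then obtain c where c: "0 < c" "\<And>x. T2 x = c * T x" using i by blast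
      define k where "k = (1 - 1 / c) / lam"
      have G2eq: "G2 x = k * (1 / T x)" for x
      proof -
        have "c * T x \<noteq> 0" using c(1) T(4)[of x] by simp
        moreover have "1 / D x = c * T x" using c(2)[of x] unfolding T2_def by simp
        ultimately have "D x = 1 / (c * T x)" by (metis divide_divide_eq_right div_by_1 div_self mult_1 nonzero_divide_eq_eq)
        then have "lam * G2 x = 1 / T x - 1 / (c * T x)" unfolding D_def by simp
        also have "\<dots> = (1 - 1 / c) * (1 / T x)" using c(1) T(4)[of x] by (simp add: field_simps)
        finally have h: "lam * G2 x = (1 - 1 / c) * (1 / T x)" .
        have "G2 x = (lam * G2 x) / lam" using lam0 by simp
        also have "\<dots> = ((1 - 1 / c) * (1 / T x)) / lam" using h by simp
        also have "\<dots> = k * (1 / T x)" unfolding k_def by simp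
        finally show ?thesis .
      qed
      have "q G2 = k * q (\<lambda>x. 1 / T x)" by (rule meas_scale[OF q(1) T(5)]) (rule G2eq)
      then show False using q(2) qneg by simp
    qed
    then show "0 \<le> fst (mzero, q) G1 + snd (mzero, q) G2" by (simp add: mzero_def)
  qed
  show "(mzero, q) \<in> hatP P"
  proof (rule hatP_closed)
    show "(mzero, q) \<in> Vsp" using q by (simp add: Vsp_iff) (simp add: mzero_def)
    fix F :: "('a \<Rightarrow> real) set" and e :: real assume "finite F" "F \<subseteq> cfuns" "e > 0"
    then show "\<exists>v\<in>hatP P. closeF F e (mzero, q) v" using approx by blast
  qed
qed

theorem theorem4p1:
  fixes P :: "('a::t2_space meas \<times> 'a meas) set" and T :: "'a \<Rightarrow> real"
  assumes "compact (UNIV :: 'a set)"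
    and "kelvin_planck P"
    and "CD_temp P T"
  shows "((\<forall>T'. CD_temp P T' \<longrightarrow> (\<exists>c>0. \<forall>x. T' x = c * T x))
          \<longleftrightarrow> (\<forall>q\<in>meas. q (\<lambda>x. 1 / T x) = 0 \<longrightarrow> (mzero, q) \<in> hatP P))
       \<and> ((\<forall>q\<in>meas. q (\<lambda>x. 1 / T x) = 0 \<longrightarrow> (mzero, q) \<in> hatP P)
          \<longleftrightarrow> (\<forall>h'\<in>hotness_levels P. \<forall>h\<in>hotness_levels P. \<exists>u. carnot_between P h' h u))
       \<and> ((\<forall>h'\<in>hotness_levels P. \<forall>h\<in>hotness_levels P. \<exists>u. carnot_between P h' h u)
          \<longleftrightarrow> (\<forall>\<sigma>' \<sigma>. \<exists>c' c. 0 < c' \<and> 0 < c \<and> c' / c = T \<sigma>' / T \<sigma> \<and>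
                 carnot P (mzero, mdiff (mscale c' (dirac \<sigma>')) (mscale c (dirac \<sigma>)))))"
  using i_ii[OF assms] ii_i[OF assms] ii_iii[OF assms] iii_iv[OF assms] iv_ii[OF assms]
  by blast


end
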